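(* Let $A \in L(H)$ and $\rho > 0$ with $\sigma(A) \cap S_\rho = \emptyset$, and set $M_\rho \coloneqq \sup_{z \in S_\rho} |(z-A)^{-1}|_{L(H)} < \infty$. Let $F \colon \ell_{2,\rho}(\mathbb{Z}; H) \to \ell_{2,\rho}(\mathbb{Z}; H)$ be Lipschitz continuous with Lipschitz constant $|F|_{\operatorname{Lip}(\ell_{2,\rho}(\mathbb{Z}; H))} < 1/M_\rho$. Then for each $x \in H$ there exists a unique $u \in \ell_{2,\rho}(\mathbb{Z}; H)$ with $$\tau u = Au + F(u) + \delta_{-1} x.$$
   Context: $H$ is a separable complex Hilbert space, $\sigma(A)$ is the spectrum of $A$, $S_\rho = \{z\in\mathbb{C}: |z|=\rho\}$. $\ell_{2,\rho}(\mathbb{Z}; H) = \{u \in H^{\mathbb{Z}} : \sum_{k} |u_k|_H^2 \rho^{-2k} < \infty\}$ with norm $(\sum_k|u_k|_H^2\rho^{-2k})^{1/2}$. $\tau$ is the shift $(\tau u)_n = u_{n+1}$, $Au = (Au_n)_n$, and $\delta_{-1}x$ is the sequence with entry $x$ at index $-1$ and $0$ elsewhere. *)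

theory Defs
  imports "HOL-Analysis.Analysis"
begin

text \<open>Complex Hilbert spaces: a real Hilbert space (real part of the complex inner
product) together with a complex scalar multiplication extending the real one,
for which multiplication by the imaginary unit is orthogonal.\<close>

class complex_hilbert = real_inner + complete_space +
  fixes scaleC :: "complex \<Rightarrow> 'a \<Rightarrow> 'a" (infixr \<open>*\<^sub>C\<close> 75)
  assumes scaleC_add_right: "scaleC a (x + y) = scaleC a x + scaleC a y"
    and scaleC_add_left: "scaleC (a + b) x = scaleC a x + scaleC b x"
    and scaleC_scaleC: "scaleC a (scaleC b x) = scaleC (a * b) x"
    and scaleC_of_real: "scaleC (complex_of_real r) x = r *\<^sub>R x"
    and inner_scaleC_ii: "inner (scaleC \<i> x) (scaleC \<i> y) = inner x y"

definition separable_space :: "'a::topological_space itself \<Rightarrow> bool" where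
  "separable_space _ \<longleftrightarrow> (\<exists>D::'a set. countable D \<and> closure D = UNIV)"

definition bounded_clinear :: "('a::complex_hilbert \<Rightarrow> 'b::complex_hilbert) \<Rightarrow> bool" where
  "bounded_clinear T \<longleftrightarrow>
     (\<forall>x y. T (x + y) = T x + T y) \<and> (\<forall>c x. T (c *\<^sub>C x) = c *\<^sub>C T x) \<and>
     (\<exists>K. \<forall>x. norm (T x) \<le> K * norm x)"

definition zminus :: "complex \<Rightarrow> ('a::complex_hilbert \<Rightarrow> 'a) \<Rightarrow> 'a \<Rightarrow> 'a" where
  "zminus z A = (\<lambda>x. z *\<^sub>C x - A x)"

definition spectrum :: "('a::complex_hilbert \<Rightarrow> 'a) \<Rightarrow> complex set" where
  "spectrum A = {z. \<not> (\<exists>B. bounded_clinear B \<and> (\<forall>x. B (zminus z A x) = x) \<and> (\<forall>x. zminus z A (B x) = x))}"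

text \<open>Resolvent (z - A)^{-1} (meaningful for z outside the spectrum).\<close>
definition resolvent :: "('a::complex_hilbert \<Rightarrow> 'a) \<Rightarrow> complex \<Rightarrow> 'a \<Rightarrow> 'a" where
  "resolvent A z = inv (zminus z A)"

definition M_rho :: "('a::complex_hilbert \<Rightarrow> 'a) \<Rightarrow> real \<Rightarrow> real" where
  "M_rho A \<rho> = (SUP z\<in>sphere 0 \<rho>. onorm (resolvent A z))"

definition l2rho :: "real \<Rightarrow> (int \<Rightarrow> 'a::real_normed_vector) set" where
  "l2rho \<rho> = {u. (\<lambda>k. (norm (u k))\<^sup>2 * \<rho> powr (- 2 * real_of_int k)) summable_on UNIV}"

definition norm_l2rho :: "real \<Rightarrow> (int \<Rightarrow> 'a::real_normed_vector) \<Rightarrow> real" where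
  "norm_l2rho \<rho> u = sqrt (\<Sum>\<^sub>\<infinity>k. (norm (u k))\<^sup>2 * \<rho> powr (- 2 * real_of_int k))"

text \<open>Lipschitz constant of a self-map of l_{2,rho} (infimum of admissible constants;
it is itself admissible).\<close>
definition lip_l2rho :: "real \<Rightarrow> ((int \<Rightarrow> 'a::real_normed_vector) \<Rightarrow> (int \<Rightarrow> 'a)) \<Rightarrow> real" where
  "lip_l2rho \<rho> F = Inf {L. 0 \<le> L \<and> (\<forall>u\<in>l2rho \<rho>. \<forall>v\<in>l2rho \<rho>.
        norm_l2rho \<rho> (F u - F v) \<le> L * norm_l2rho \<rho> (u - v))}"

definition lipschitz_l2rho :: "real \<Rightarrow> ((int \<Rightarrow> 'a::real_normed_vector) \<Rightarrow> (int \<Rightarrow> 'a)) \<Rightarrow> bool" where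
  "lipschitz_l2rho \<rho> F \<longleftrightarrow> (\<exists>L. \<forall>u\<in>l2rho \<rho>. \<forall>v\<in>l2rho \<rho>.
        norm_l2rho \<rho> (F u - F v) \<le> L * norm_l2rho \<rho> (u - v))"

definition shift :: "(int \<Rightarrow> 'a) \<Rightarrow> int \<Rightarrow> 'a" where
  "shift u = (\<lambda>n. u (n + 1))"

definition delta_m1 :: "'a::zero \<Rightarrow> int \<Rightarrow> 'a" where
  "delta_m1 x = (\<lambda>n. if n = -1 then x else 0)"

end

theory Submission
  imports Defs
begin

definition l2set :: "(int \<Rightarrow> 'a::real_normed_vector) set" where
  "l2set = {f. (\<lambda>k. (norm (f k))\<^sup>2) summable_on UNIV}"

lemma l2set_0: "(\<lambda>_. 0) \<in> l2set"
  by (simp add: l2set_def)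

lemma sq_sum_le: "(x + y)\<^sup>2 \<le> 2*x\<^sup>2 + 2*(y::real)\<^sup>2"
proof -
  have "0 \<le> (x-y)\<^sup>2" by simp
  thus ?thesis by (simp add: power2_eq_square algebra_simps)
qed

lemma prod_le_sq: "0 \<le> x \<Longrightarrow> 0 \<le> y \<Longrightarrow> x * y \<le> x\<^sup>2 + (y::real)\<^sup>2"
proof -
  assume "0 \<le> x" "0 \<le> y"
  have "0 \<le> (x-y)\<^sup>2" by simp
  moreover have "0 \<le> x * y" using \<open>0 \<le> x\<close> \<open>0 \<le> y\<close> by simp
  ultimately show ?thesis by (simp add: power2_eq_square algebra_simps)
qed

lemma sq_norm_add_le: "(norm (a + b::'a::real_normed_vector))\<^sup>2 \<le> 2 * (norm a)\<^sup>2 + 2 * (norm b)\<^sup>2"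
proof -
  have "norm (a+b) \<le> norm a + norm b" by (rule norm_triangle_ineq)
  hence "(norm (a+b))\<^sup>2 \<le> (norm a + norm b)\<^sup>2" by (simp add: power_mono)
  also have "\<dots> \<le> 2 * (norm a)\<^sup>2 + 2 * (norm b)\<^sup>2"
    by (rule sq_sum_le)
  finally show ?thesis .
qed

lemma l2set_add: "f \<in> l2set \<Longrightarrow> g \<in> l2set \<Longrightarrow> (\<lambda>k. f k + g k) \<in> l2set"
  unfolding l2set_def mem_Collect_eq
  apply (rule summable_on_comparison_test[where f="\<lambda>k. 2 * (norm (f k))\<^sup>2 + 2 * (norm (g k))\<^sup>2"])
  by (auto intro!: summable_on_add summable_on_cmult_right sq_norm_add_le)

lemma l2set_scale: "f \<in> l2set \<Longrightarrow> (\<lambda>k. c *\<^sub>R f k) \<in> l2set"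
  unfolding l2set_def mem_Collect_eq
  by (auto simp: power_mult_distrib intro!: summable_on_cmult_right)

lemma l2set_uminus: "f \<in> l2set \<Longrightarrow> (\<lambda>k. - f k) \<in> l2set"
  using l2set_scale[of f "-1"] by simp

lemma l2set_diff: "f \<in> l2set \<Longrightarrow> g \<in> l2set \<Longrightarrow> (\<lambda>k. f k - g k) \<in> l2set"
  using l2set_add[of f "\<lambda>k. - g k"] l2set_uminus[of g] by simp

typedef (overloaded) 'a l2 = "l2set :: (int \<Rightarrow> 'a::real_inner) set"
  morphisms vec Abs_l2
  using l2set_0 by blast

lemma vec_l2set: "vec x \<in> l2set" using vec by blast

lemma inner_abs_le: "\<bar>inner a b\<bar> \<le> (norm a)\<^sup>2 + (norm (b::'a::real_inner))\<^sup>2"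
proof -
  have "\<bar>inner a b\<bar> \<le> norm a * norm b" by (rule Cauchy_Schwarz_ineq2)
  also have "\<dots> \<le> (norm a)\<^sup>2 + (norm b)\<^sup>2" by (rule prod_le_sq) simp_all
  finally show ?thesis .
qed

lemma l2_inner_summable:
  assumes "f \<in> l2set" "g \<in> l2set"
  shows "(\<lambda>k. inner (f k) (g k::'a::real_inner)) summable_on UNIV"
proof -
  have "(\<lambda>k. norm (inner (f k) (g k))) summable_on UNIV"
    apply (rule summable_on_comparison_test[where f="\<lambda>k. (norm (f k))\<^sup>2 + (norm (g k))\<^sup>2"])
    subgoal using assms unfolding l2set_def by (intro summable_on_add) auto
    subgoal for k using inner_abs_le[of "f k" "g k"] by simp
    subgoal by simp
    done
  thus ?thesis by (rule abs_summable_summable)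
qed

lemma l2_sq_summable: "f \<in> l2set \<Longrightarrow> (\<lambda>k. (norm (f k))\<^sup>2) summable_on UNIV"
  by (simp add: l2set_def)

instantiation l2 :: (real_inner) real_inner
begin
definition zero_l2_def: "0 = Abs_l2 (\<lambda>_. 0)"
definition plus_l2_def: "x + y = Abs_l2 (\<lambda>k. vec x k + vec y k)"
definition minus_l2_def: "x - y = Abs_l2 (\<lambda>k. vec x k - vec y k)"
definition uminus_l2_def: "- x = Abs_l2 (\<lambda>k. - vec x k)"
definition scaleR_l2_def: "scaleR c x = Abs_l2 (\<lambda>k. c *\<^sub>R vec x k)"
definition inner_l2_def: "inner x y = infsum (\<lambda>k. inner (vec x k) (vec y k)) UNIV"
definition norm_l2_def: "norm x = sqrt (infsum (\<lambda>k. (norm (vec x k))\<^sup>2) UNIV)"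
definition sgn_l2_def: "sgn x = scaleR (inverse (norm x)) (x::'a l2)"
definition dist_l2_def: "dist x y = norm (x - y::'a l2)"
definition uniformity_l2_def: "uniformity = (INF e\<in>{0<..}. principal {(x::'a l2, y). dist x y < e})"
definition open_l2_def: "open U = (\<forall>x\<in>U. \<forall>\<^sub>F (x', y) in uniformity. x' = x \<longrightarrow> y \<in> (U::'a l2 set))"

lemma vec_zero: "vec 0 = (\<lambda>_. 0)"
  by (simp add: zero_l2_def Abs_l2_inverse l2set_0)
lemma vec_plus: "vec (x + y) = (\<lambda>k. vec x k + vec y k)"
  by (simp add: plus_l2_def Abs_l2_inverse l2set_add vec_l2set)
lemma vec_minus: "vec (x - y) = (\<lambda>k. vec x k - vec y k)"
  by (simp add: minus_l2_def Abs_l2_inverse l2set_diff vec_l2set)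
lemma vec_uminus: "vec (- x) = (\<lambda>k. - vec x k)"
  by (simp add: uminus_l2_def Abs_l2_inverse l2set_uminus vec_l2set)
lemma vec_scaleR: "vec (scaleR c x) = (\<lambda>k. c *\<^sub>R vec x k)"
  by (simp add: scaleR_l2_def Abs_l2_inverse l2set_scale vec_l2set)

lemmas vec_simps = vec_zero vec_plus vec_minus vec_uminus vec_scaleR

lemma l2_eqI: "(\<And>k. vec x k = vec y k) \<Longrightarrow> x = y"
  by (metis ext vec_inject)

instance
proof
  fix x y z :: "'a l2" and a b :: real
  show "x + y + z = x + (y + z)" by (rule l2_eqI) (simp add: vec_simps add.assoc)
  show "x + y = y + x" by (rule l2_eqI) (simp add: vec_simps add.commute)
  show "0 + x = x" by (rule l2_eqI) (simp add: vec_simps)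
  show "- x + x = 0" by (rule l2_eqI) (simp add: vec_simps)
  show "x - y = x + - y" by (rule l2_eqI) (simp add: vec_simps)
  show "a *\<^sub>R (x + y) = a *\<^sub>R x + a *\<^sub>R y" by (rule l2_eqI) (simp add: vec_simps scaleR_add_right)
  show "(a + b) *\<^sub>R x = a *\<^sub>R x + b *\<^sub>R x" by (rule l2_eqI) (simp add: vec_simps scaleR_add_left)
  show "a *\<^sub>R b *\<^sub>R x = (a * b) *\<^sub>R x" by (rule l2_eqI) (simp add: vec_simps)
  show "1 *\<^sub>R x = x" by (rule l2_eqI) (simp add: vec_simps)
  show "sgn x = inverse (norm x) *\<^sub>R x" by (simp add: sgn_l2_def)
  show "dist x y = norm (x - y)" by (simp add: dist_l2_def)
  show "uniformity = (INF e\<in>{0<..}. principal {(x::'a l2, y). dist x y < e})" by (simp add: uniformity_l2_def)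
  show "open (U::'a l2 set) = (\<forall>x\<in>U. \<forall>\<^sub>F (x', y) in uniformity. x' = x \<longrightarrow> y \<in> U)" for U
    by (simp add: open_l2_def)
  show "inner x y = inner y x" by (simp add: inner_l2_def inner_commute)
  show "inner (x + y) z = inner x z + inner y z"
    by (simp add: inner_l2_def vec_simps inner_add_left infsum_add l2_inner_summable vec_l2set)
  show "inner (a *\<^sub>R x) y = a * inner x y"
    by (simp add: inner_l2_def vec_simps infsum_cmult_right l2_inner_summable vec_l2set)
  show "0 \<le> inner x x" by (simp add: inner_l2_def infsum_nonneg)
  show "(inner x x = 0) = (x = 0)"
  proof
    assume h: "inner x x = 0"
    show "x = 0"
    proof (rule l2_eqI)
      fix k
      have "(\<lambda>k. inner (vec x k) (vec x k)) k = 0"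
        apply (rule nonneg_infsum_le_0D[where f="\<lambda>k. inner (vec x k) (vec x k)" and A=UNIV])
        using h by (auto simp: inner_l2_def l2_inner_summable vec_l2set)
      thus "vec x k = vec 0 k" by (simp add: vec_zero)
    qed
  next
    assume "x = 0" thus "inner x x = 0" by (simp add: inner_l2_def vec_zero)
  qed
  show "norm x = sqrt (inner x x)"
    by (simp add: norm_l2_def inner_l2_def power2_norm_eq_inner)
qed
end


lemma vec_Abs: "f \<in> l2set \<Longrightarrow> vec (Abs_l2 f) = f"
  by (simp add: Abs_l2_inverse)

lemma norm_l2_sq: "(norm (x::'a::real_inner l2))\<^sup>2 = infsum (\<lambda>k. (norm (vec x k))\<^sup>2) UNIV"
  by (simp add: norm_l2_def infsum_nonneg)

lemma l2_finite_le: "finite F \<Longrightarrow> (\<Sum>k\<in>F. (norm (vec x k))\<^sup>2) \<le> (norm (x::'a::real_inner l2))\<^sup>2"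
  unfolding norm_l2_sq
  by (rule finite_sum_le_infsum) (auto simp: l2_sq_summable vec_l2set)

lemma norm_vec_le: "norm (vec x k) \<le> norm (x::'a::real_inner l2)"
proof -
  have "(norm (vec x k))\<^sup>2 \<le> (norm x)\<^sup>2" using l2_finite_le[of "{k}" x] by simp
  thus ?thesis by (simp add: power_mono_iff)
qed

lemma l2_norm_eqI:
  assumes "f \<in> l2set"
  shows "norm (Abs_l2 f) = sqrt (infsum (\<lambda>k. (norm (f k))\<^sup>2) UNIV)"
  by (simp add: norm_l2_def vec_Abs assms)

instance l2 :: ("{real_inner, complete_space}") complete_space
proof
  fix X :: "nat \<Rightarrow> 'a l2" assume C: "Cauchy X"
  have Ck: "Cauchy (\<lambda>i. vec (X i) k)" for k
  proof (rule CauchyI)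
    fix e :: real assume "0 < e"
    from CauchyD[OF C this] obtain M where M: "\<forall>m\<ge>M. \<forall>n\<ge>M. norm (X m - X n) < e" by blast
    show "\<exists>M. \<forall>m\<ge>M. \<forall>n\<ge>M. norm (vec (X m) k - vec (X n) k) < e"
    proof (intro exI allI impI)
      fix m n assume "M \<le> m" "M \<le> n"
      have "norm (vec (X m) k - vec (X n) k) = norm (vec (X m - X n) k)" by (simp add: vec_minus)
      also have "\<dots> \<le> norm (X m - X n)" by (rule norm_vec_le)
      also have "\<dots> < e" using M \<open>M \<le> m\<close> \<open>M \<le> n\<close> by blast
      finally show "norm (vec (X m) k - vec (X n) k) < e" .
    qed
  qed
  define f where "f k = lim (\<lambda>i. vec (X i) k)" for k
  have fl: "(\<lambda>i. vec (X i) k) \<longlonglongrightarrow> f k" for k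
    using Ck[of k] unfolding f_def by (simp add: Cauchy_convergent_iff convergent_LIMSEQ_iff)
  have key: "\<exists>N. \<forall>n\<ge>N. (\<lambda>k. vec (X n) k - f k) \<in> l2set \<and>
               infsum (\<lambda>k. (norm (vec (X n) k - f k))\<^sup>2) UNIV \<le> e\<^sup>2" if "e > 0" for e
  proof -
    from CauchyD[OF C that] obtain M where M: "\<forall>m\<ge>M. \<forall>n\<ge>M. norm (X m - X n) < e" by blast
    show ?thesis
    proof (intro exI allI impI)
      fix n assume "M \<le> n"
      have fin: "(\<Sum>k\<in>F. (norm (vec (X n) k - f k))\<^sup>2) \<le> e\<^sup>2" if "finite F" for F
      proof -
        have lim: "(\<lambda>m. \<Sum>k\<in>F. (norm (vec (X n) k - vec (X m) k))\<^sup>2) \<longlonglongrightarrow> (\<Sum>k\<in>F. (norm (vec (X n) k - f k))\<^sup>2)"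
          by (intro tendsto_intros fl)
        show ?thesis
        proof (rule LIMSEQ_le_const2[OF lim], intro exI allI impI)
          fix m assume "M \<le> m"
          have "(\<Sum>k\<in>F. (norm (vec (X n) k - vec (X m) k))\<^sup>2) = (\<Sum>k\<in>F. (norm (vec (X n - X m) k))\<^sup>2)"
            by (simp add: vec_minus)
          also have "\<dots> \<le> (norm (X n - X m))\<^sup>2" by (rule l2_finite_le[OF that])
          also have "\<dots> \<le> e\<^sup>2" using M \<open>M \<le> m\<close> \<open>M \<le> n\<close>
            by (meson less_imp_le norm_ge_zero power_mono)
          finally show "(\<Sum>k\<in>F. (norm (vec (X n) k - vec (X m) k))\<^sup>2) \<le> e\<^sup>2" .
        qed
      qed
      have S: "(\<lambda>k. (norm (vec (X n) k - f k))\<^sup>2) summable_on UNIV"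
        by (rule nonneg_bdd_above_summable_on) (auto intro!: bdd_aboveI[where M="e\<^sup>2"] fin)
      then show "(\<lambda>k. vec (X n) k - f k) \<in> l2set \<and> infsum (\<lambda>k. (norm (vec (X n) k - f k))\<^sup>2) UNIV \<le> e\<^sup>2"
        by (auto simp: l2set_def intro!: infsum_le_finite_sums fin)
    qed
  qed
  from key[of 1] obtain n where "(\<lambda>k. vec (X n) k - f k) \<in> l2set" by auto
  from l2set_diff[OF vec_l2set[of "X n"] this] have fL: "f \<in> l2set" by simp
  have "X \<longlonglongrightarrow> Abs_l2 f"
  proof (rule LIMSEQ_I)
    fix r :: real assume "0 < r"
    then obtain N where N: "\<forall>n\<ge>N. infsum (\<lambda>k. (norm (vec (X n) k - f k))\<^sup>2) UNIV \<le> (r/2)\<^sup>2"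
      using key[of "r/2"] by auto
    show "\<exists>no. \<forall>n\<ge>no. norm (X n - Abs_l2 f) < r"
    proof (intro exI allI impI)
      fix n assume "N \<le> n"
      have "(norm (X n - Abs_l2 f))\<^sup>2 = infsum (\<lambda>k. (norm (vec (X n) k - f k))\<^sup>2) UNIV"
        by (simp add: norm_l2_sq vec_minus vec_Abs fL)
      also have "\<dots> \<le> (r/2)\<^sup>2" using N \<open>N \<le> n\<close> by blast
      finally have "norm (X n - Abs_l2 f) \<le> r/2" using \<open>0 < r\<close>
        by (simp add: power_mono_iff)
      thus "norm (X n - Abs_l2 f) < r" using \<open>0 < r\<close> by simp
    qed
  qed
  thus "convergent X" by (auto simp: convergent_def)
qed


section \<open>Complex structure\<close>

lemma scaleC_zero_left[simp]: "(0::complex) *\<^sub>C (x::'a::complex_hilbert) = 0"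
  using scaleC_of_real[of 0 x] by simp

lemma scaleC_one[simp]: "(1::complex) *\<^sub>C (x::'a::complex_hilbert) = x"
  using scaleC_of_real[of 1 x] by simp

lemma scaleC_zero_right[simp]: "a *\<^sub>C (0::'a::complex_hilbert) = 0"
  using scaleC_add_right[of a "0::'a" 0] by simp

lemma scaleC_minus_right: "a *\<^sub>C (- x) = - (a *\<^sub>C (x::'a::complex_hilbert))"
proof -
  have "a *\<^sub>C x + a *\<^sub>C (- x) = 0" using scaleC_add_right[of a x "-x"] by simp
  from minus_unique[OF this] show ?thesis by simp
qed

lemma scaleC_diff_right: "a *\<^sub>C (x - y) = a *\<^sub>C x - a *\<^sub>C (y::'a::complex_hilbert)"
  using scaleC_add_right[of a x "-y"] scaleC_minus_right[of a y] by simp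

lemma scaleC_minus_left: "(- a) *\<^sub>C x = - (a *\<^sub>C (x::'a::complex_hilbert))"
proof -
  have "a *\<^sub>C x + (- a) *\<^sub>C x = 0" using scaleC_add_left[of a "-a" x] by simp
  from minus_unique[OF this] show ?thesis by simp
qed

lemma scaleC_diff_left: "(a - b) *\<^sub>C x = a *\<^sub>C x - b *\<^sub>C (x::'a::complex_hilbert)"
  using scaleC_add_left[of a "-b" x] scaleC_minus_left[of b x] by simp

lemma scaleC_sum_right: "a *\<^sub>C (sum f S) = (\<Sum>i\<in>S. a *\<^sub>C (f i::'a::complex_hilbert))"
  by (induction S rule: infinite_finite_induct) (simp_all add: scaleC_add_right)

lemma scaleC_sum_left: "(sum c S) *\<^sub>C x = (\<Sum>i\<in>S. c i *\<^sub>C (x::'a::complex_hilbert))"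
  by (induction S rule: infinite_finite_induct) (simp_all add: scaleC_add_left)

lemma scaleC_scaleR_left: "a *\<^sub>C (r *\<^sub>R x) = (a * of_real r) *\<^sub>C (x::'a::complex_hilbert)"
  by (metis scaleC_of_real scaleC_scaleC)

lemma scaleR_scaleC: "r *\<^sub>R (a *\<^sub>C x) = (of_real r * a) *\<^sub>C (x::'a::complex_hilbert)"
  by (metis scaleC_of_real scaleC_scaleC)

lemma scaleC_decomp: "a *\<^sub>C x = Re a *\<^sub>R x + Im a *\<^sub>R (\<i> *\<^sub>C (x::'a::complex_hilbert))"
proof -
  have "a = complex_of_real (Re a) + complex_of_real (Im a) * \<i>"
    by (simp add: complex_eq_iff)
  hence "a *\<^sub>C x = complex_of_real (Re a) *\<^sub>C x + (complex_of_real (Im a) * \<i>) *\<^sub>C x"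
    by (metis scaleC_add_left)
  also have "\<dots> = Re a *\<^sub>R x + Im a *\<^sub>R (\<i> *\<^sub>C x)"
    by (simp add: scaleC_of_real scaleC_scaleC[symmetric])
  finally show ?thesis .
qed

lemma scaleC_ii_ii: "\<i> *\<^sub>C (\<i> *\<^sub>C x) = - (x::'a::complex_hilbert)"
proof -
  have "\<i> *\<^sub>C (\<i> *\<^sub>C x) = complex_of_real (-1) *\<^sub>C x" by (simp add: scaleC_scaleC)
  also have "\<dots> = - x" by (simp add: scaleC_minus_left)
  finally show ?thesis .
qed

lemma inner_ii_left: "inner (\<i> *\<^sub>C x) y = - inner x (\<i> *\<^sub>C (y::'a::complex_hilbert))"
proof -
  have "inner (\<i> *\<^sub>C x) y = inner (\<i> *\<^sub>C (\<i> *\<^sub>C x)) (\<i> *\<^sub>C y)" by (simp add: inner_scaleC_ii)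
  also have "\<dots> = - inner x (\<i> *\<^sub>C y)" by (simp add: scaleC_ii_ii)
  finally show ?thesis .
qed

lemma inner_scaleC:
  "inner (a *\<^sub>C x) (b *\<^sub>C y) = Re (a * cnj b) * inner x y + Im (a * cnj b) * inner (\<i> *\<^sub>C x) (y::'a::complex_hilbert)"
proof -
  have e1: "inner x (\<i> *\<^sub>C y) = - inner (\<i> *\<^sub>C x) y" by (simp add: inner_ii_left)
  have e2: "inner (\<i> *\<^sub>C x) (\<i> *\<^sub>C y) = inner x y" by (simp add: inner_scaleC_ii)
  show ?thesis
    unfolding scaleC_decomp[of a x] scaleC_decomp[of b y]
    by (simp add: inner_add_left inner_add_right e1 e2 algebra_simps)
qed

lemma norm_scaleC: "norm (a *\<^sub>C x) = cmod a * norm (x::'a::complex_hilbert)"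
proof -
  have "a * cnj a = complex_of_real ((cmod a)\<^sup>2)" using complex_norm_square[of a] by simp
  hence "(norm (a *\<^sub>C x))\<^sup>2 = (cmod a)\<^sup>2 * (norm x)\<^sup>2"
    by (simp add: power2_norm_eq_inner inner_scaleC)
  hence "(norm (a *\<^sub>C x))\<^sup>2 = (cmod a * norm x)\<^sup>2" by (simp add: power_mult_distrib)
  thus ?thesis by (simp add: power2_eq_iff_nonneg)
qed

section \<open>Operators\<close>

lemma bcl_add: "bounded_clinear T \<Longrightarrow> T (x + y) = T x + T y"
  by (simp add: bounded_clinear_def)
lemma bcl_scaleC: "bounded_clinear T \<Longrightarrow> T (c *\<^sub>C x) = c *\<^sub>C T x"
  by (simp add: bounded_clinear_def)
lemma bcl_scaleR: "bounded_clinear T \<Longrightarrow> T (r *\<^sub>R x) = r *\<^sub>R T x"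
  by (metis bcl_scaleC scaleC_of_real)
lemma bcl_zero: "bounded_clinear T \<Longrightarrow> T 0 = 0"
  using bcl_scaleR[of T 0] by simp
lemma bcl_minus: "bounded_clinear T \<Longrightarrow> T (- x) = - T x"
  using bcl_scaleR[of T "-1" x] by simp
lemma bcl_diff: "bounded_clinear T \<Longrightarrow> T (x - y) = T x - T y"
  using bcl_add[of T x "-y"] bcl_minus[of T y] by simp
lemma bcl_sum: "bounded_clinear T \<Longrightarrow> T (sum f S) = (\<Sum>i\<in>S. T (f i))"
  by (induction S rule: infinite_finite_induct) (simp_all add: bcl_zero bcl_add)
lemma bcl_bound: "bounded_clinear T \<Longrightarrow> \<exists>K\<ge>0. \<forall>x. norm (T x) \<le> K * norm x"
proof -
  assume "bounded_clinear T"
  then obtain K where K: "\<forall>x. norm (T x) \<le> K * norm x" by (auto simp: bounded_clinear_def)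
  have "norm (T x) \<le> max K 0 * norm x" for x
    using K[rule_format, of x] by (smt (verit, best) mult_right_mono norm_ge_zero)
  thus ?thesis by (intro exI[of _ "max K 0"]) auto
qed
lemma bcl_bounded_linear: "bounded_clinear T \<Longrightarrow> bounded_linear T"
proof -
  assume h: "bounded_clinear T"
  then obtain K where "K\<ge>0" "\<forall>x. norm (T x) \<le> K * norm x" using bcl_bound by blast
  thus ?thesis using h
    by (intro bounded_linear_intro[where K=K]) (auto simp: bcl_add bcl_scaleR mult.commute)
qed

lemma zminus_apply: "zminus z A x = z *\<^sub>C x - A x" by (simp add: zminus_def)

lemma resolvent_props:
  assumes "z \<notin> spectrum A"
  shows "(\<forall>y. zminus z A (resolvent A z y) = y) \<and> (\<forall>y. resolvent A z (zminus z A y) = y)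
         \<and> bounded_clinear (resolvent A z)"
proof -
  from assms obtain B where B: "bounded_clinear B" "\<forall>x. B (zminus z A x) = x" "\<forall>x. zminus z A (B x) = x"
    by (auto simp: spectrum_def)
  have "resolvent A z = B" unfolding resolvent_def
    by (rule inv_equality) (use B in auto)
  thus ?thesis using B by simp
qed


lemma resolvent_bdd:
  fixes A :: "'a::complex_hilbert \<Rightarrow> 'a"
  assumes "spectrum A \<inter> sphere 0 \<rho> = {}"
  shows "bdd_above ((\<lambda>z. onorm (resolvent A z)) ` sphere 0 \<rho>)"
proof -
  let ?S = "sphere (0::complex) \<rho>"
  have loc: "\<exists>r>0. \<forall>z\<in>?S. dist z0 z < r \<longrightarrow> onorm (resolvent A z) \<le> 2 * (onorm (resolvent A z0) + 1)"
    if "z0 \<in> ?S" for z0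
  proof -
    define m where "m = onorm (resolvent A z0)"
    have z0: "z0 \<notin> spectrum A" using assms that by blast
    note R0 = resolvent_props[OF z0]
    have bl0: "bounded_linear (resolvent A z0)" using R0 bcl_bounded_linear by blast
    have m0: "0 \<le> m" using onorm_pos_le[OF bl0] m_def by simp
    define r where "r = 1 / (2 * (m+1))"
    have r0: "r > 0" using m0 by (simp add: r_def)
    have mr: "(m+1) * r = 1/2" using m0 by (simp add: r_def)
    show ?thesis
    proof (intro exI[of _ r] conjI r0 ballI impI)
      fix z assume zS: "z \<in> ?S" and dz: "dist z0 z < r"
      have zsp: "z \<notin> spectrum A" using assms zS by blast
      note R = resolvent_props[OF zsp]
      have low: "norm y \<le> 2*(m+1) * norm (zminus z A y)" for y
      proof -
        have "norm y = norm (resolvent A z0 (zminus z0 A y))" using R0 by simp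
        also have "\<dots> \<le> m * norm (zminus z0 A y)" using onorm[OF bl0] m_def by simp
        also have "\<dots> \<le> (m+1) * norm (zminus z0 A y)" by (simp add: mult_right_mono)
        finally have 1: "norm y \<le> (m+1) * norm (zminus z0 A y)" .
        have "zminus z0 A y = zminus z A y + (z0 - z) *\<^sub>C y"
          by (simp add: zminus_def scaleC_diff_left)
        hence "norm (zminus z0 A y) \<le> norm (zminus z A y) + cmod (z0 - z) * norm y"
          by (metis norm_triangle_ineq norm_scaleC)
        also have "cmod (z0 - z) * norm y \<le> r * norm y"
          using dz by (simp add: dist_norm mult_right_mono)
        finally have 2: "norm (zminus z0 A y) \<le> norm (zminus z A y) + r * norm y" by simp
        have "(m+1) * norm (zminus z0 A y) \<le> (m+1) * (norm (zminus z A y) + r * norm y)"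
          using 2 m0 by (simp add: mult_left_mono)
        also have "\<dots> = (m+1) * norm (zminus z A y) + ((m+1) * r) * norm y" by (simp add: algebra_simps)
        also have "\<dots> = (m+1) * norm (zminus z A y) + norm y / 2" using mr by simp
        finally have "norm y \<le> 2 * ((m+1) * norm (zminus z A y))" using 1 by linarith
        thus ?thesis by (simp only: mult.assoc)
      qed
      have "onorm (resolvent A z) \<le> 2*(m+1)"
      proof (rule onorm_bound)
        show "0 \<le> 2*(m+1)" using m0 by simp
        fix x show "norm (resolvent A z x) \<le> 2*(m+1) * norm x"
          using low[of "resolvent A z x"] R by simp
      qed
      thus "onorm (resolvent A z) \<le> 2 * (onorm (resolvent A z0) + 1)" by (simp add: m_def)
    qed
  qed
  hence "\<forall>z0\<in>?S. \<exists>r>0. \<forall>z\<in>?S. dist z0 z < r \<longrightarrow> onorm (resolvent A z) \<le> 2 * (onorm (resolvent A z0) + 1)"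
    by blast
  then obtain r where r: "\<forall>z0\<in>?S. r z0 > 0 \<and> (\<forall>z\<in>?S. dist z0 z < r z0 \<longrightarrow> onorm (resolvent A z) \<le> 2 * (onorm (resolvent A z0) + 1))"
    by (metis (no_types, lifting) bchoice)
  have "compact ?S" by simp
  then obtain C where C: "C \<subseteq> ?S" "finite C" "?S \<subseteq> (\<Union>c\<in>C. ball c (r c))"
  proof (rule compactE_image[where f="\<lambda>c. ball c (r c)" and C="?S"])
    show "open (ball c (r c))" for c by simp
    show "?S \<subseteq> (\<Union>c\<in>?S. ball c (r c))" using r by force
  qed auto
  have nn: "0 \<le> 2 * (onorm (resolvent A c) + 1)" if "c \<in> C" for c
  proof -
    have "c \<notin> spectrum A" using assms C that by blast
    hence "bounded_linear (resolvent A c)" using resolvent_props bcl_bounded_linear by blast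
    thus ?thesis using onorm_pos_le by fastforce
  qed
  show ?thesis
  proof (rule bdd_aboveI2[where M="\<Sum>c\<in>C. 2 * (onorm (resolvent A c) + 1)"])
    fix z assume zS: "z \<in> ?S"
    then obtain c where c: "c \<in> C" "z \<in> ball c (r c)" using C by blast
    then have "onorm (resolvent A z) \<le> 2 * (onorm (resolvent A c) + 1)"
      using r C zS by auto
    also have "\<dots> \<le> (\<Sum>c\<in>C. 2 * (onorm (resolvent A c) + 1))"
      by (rule member_le_sum[OF c(1)]) (use nn C(2) in blast)+
    finally show "onorm (resolvent A z) \<le> (\<Sum>c\<in>C. 2 * (onorm (resolvent A c) + 1))" .
  qed
qed

lemma resolvent_norm_le:
  fixes A :: "'a::complex_hilbert \<Rightarrow> 'a"
  assumes "spectrum A \<inter> sphere 0 \<rho> = {}" "cmod z = \<rho>"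
  shows "norm (resolvent A z y) \<le> M_rho A \<rho> * norm y"
proof -
  have zS: "z \<in> sphere 0 \<rho>" using assms by simp
  hence "z \<notin> spectrum A" using assms by blast
  hence bl: "bounded_linear (resolvent A z)" using resolvent_props bcl_bounded_linear by blast
  have "norm (resolvent A z y) \<le> onorm (resolvent A z) * norm y" by (rule onorm[OF bl])
  also have "\<dots> \<le> M_rho A \<rho> * norm y" unfolding M_rho_def
    by (rule mult_right_mono[OF cSUP_upper[OF zS resolvent_bdd[OF assms(1)]]]) simp
  finally show ?thesis .
qed

lemma M_rho_nonneg:
  fixes A :: "'a::complex_hilbert \<Rightarrow> 'a"
  assumes "spectrum A \<inter> sphere 0 \<rho> = {}" "\<rho> \<ge> 0"
  shows "0 \<le> M_rho A \<rho>"
proof -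
  have zS: "complex_of_real \<rho> \<in> sphere 0 \<rho>" using assms by simp
  hence "complex_of_real \<rho> \<notin> spectrum A" using assms by blast
  hence bl: "bounded_linear (resolvent A (complex_of_real \<rho>))" using resolvent_props bcl_bounded_linear by blast
  have "0 \<le> onorm (resolvent A (complex_of_real \<rho>))" by (rule onorm_pos_le[OF bl])
  also have "\<dots> \<le> M_rho A \<rho>" unfolding M_rho_def
    by (rule cSUP_upper[OF zS resolvent_bdd[OF assms(1)]])
  finally show ?thesis .
qed

section \<open>Roots of unity\<close>

definition ee :: "int \<Rightarrow> int \<Rightarrow> complex" where
  "ee P t = cis (2 * pi * of_int t / of_int P)"

lemma ee_add: "ee P (s + t) = ee P s * ee P t"
  by (simp add: ee_def cis_mult add_divide_distrib distrib_left)

lemma ee_0[simp]: "ee P 0 = 1" by (simp add: ee_def)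

lemma ee_norm[simp]: "cmod (ee P t) = 1" by (simp add: ee_def)

lemma ee_cnj: "cnj (ee P t) = ee P (- t)" by (simp add: ee_def cis_cnj)

lemma ee_period: "P \<noteq> 0 \<Longrightarrow> ee P (P * t) = 1"
proof -
  assume "P \<noteq> 0"
  hence "2 * pi * of_int (P * t) / of_int P = 2 * pi * of_int t" by simp
  thus ?thesis by (simp add: ee_def)
qed

lemma ee_eq_1: assumes "P > 0" "ee P t = 1" shows "P dvd t"
proof -
  have "cos (2 * pi * of_int t / of_int P) = 1"
  proof -
    have "Re (ee P t) = 1" using assms(2) by simp
    thus ?thesis unfolding ee_def by simp
  qed
  then obtain n :: int where n: "2 * pi * of_int t / of_int P = of_int n * 2 * pi"
    using cos_one_2pi_int by blast
  hence "of_int t = of_int n * (of_int P :: real)" using assms(1) pi_gt_zero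
    by (simp add: field_simps)
  hence "t = n * P" by (metis of_int_eq_iff of_int_mult)
  thus ?thesis by simp
qed

lemma ee_pow: "ee P t ^ n = ee P (t * int n)"
  by (induction n) (simp_all add: ee_add[symmetric] algebra_simps)

lemma ee_orth:
  assumes "P > 0"
  shows "(\<Sum>s\<in>{a..<a+P}. ee P (k * s)) = (if P dvd k then of_int P else 0)"
proof -
  have "(\<Sum>s\<in>{a..<a+P}. ee P (k * s)) = (\<Sum>i<nat P. ee P (k * (a + int i)))"
    by (rule sum.reindex_bij_witness[where i="\<lambda>i. a + int i" and j="\<lambda>s. nat (s - a)"]) auto
  also have "\<dots> = (\<Sum>i<nat P. ee P (k * a) * ee P k ^ i)"
    by (simp add: ee_pow ee_add[symmetric] algebra_simps)
  also have "\<dots> = ee P (k * a) * (\<Sum>i<nat P. ee P k ^ i)" by (simp add: sum_distrib_left)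
  finally have S: "(\<Sum>s\<in>{a..<a+P}. ee P (k * s)) = ee P (k * a) * (\<Sum>i<nat P. ee P k ^ i)" .
  show ?thesis
  proof (cases "P dvd k")
    case True
    then obtain q where k: "k = P * q" by blast
    have "(\<Sum>s\<in>{a..<a+P}. ee P (k * s)) = (\<Sum>s\<in>{a..<a+P}. 1)"
      using assms by (intro sum.cong) (auto simp: k ee_period mult.assoc)
    thus ?thesis using True assms by simp
  next
    case False
    hence ne: "ee P k \<noteq> 1" using ee_eq_1 assms by blast
    have "ee P k ^ nat P = 1" using assms by (simp add: ee_pow ee_period mult.commute)
    hence "(\<Sum>i<nat P. ee P k ^ i) = 0" using ne by (simp add: sum_gp_strict)
    thus ?thesis using S False by simp
  qed
qed


lemma parseval_gen:
  fixes x :: "int \<Rightarrow> 'a::complex_hilbert" and c :: "int \<Rightarrow> int \<Rightarrow> complex"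
  assumes fin: "finite I"
    and orth: "\<And>n m. n \<in> I \<Longrightarrow> m \<in> I \<Longrightarrow> (\<Sum>j\<in>J. c j n * cnj (c j m)) = (if n = m then complex_of_real C else 0)"
  shows "(\<Sum>j\<in>J. (norm (\<Sum>n\<in>I. c j n *\<^sub>C x n))\<^sup>2) = C * (\<Sum>n\<in>I. (norm (x n))\<^sup>2)"
proof -
  let ?f = "\<lambda>j n m. Re (c j n * cnj (c j m)) * inner (x n) (x m) + Im (c j n * cnj (c j m)) * inner (\<i> *\<^sub>C x n) (x m)"
  have e: "(norm (\<Sum>n\<in>I. c j n *\<^sub>C x n))\<^sup>2 = (\<Sum>n\<in>I. \<Sum>m\<in>I. inner (c j n *\<^sub>C x n) (c j m *\<^sub>C x m))" for j
    unfolding power2_norm_eq_inner inner_sum_left unfolding inner_sum_right by (rule refl)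
  have "(\<Sum>j\<in>J. (norm (\<Sum>n\<in>I. c j n *\<^sub>C x n))\<^sup>2) = (\<Sum>j\<in>J. \<Sum>n\<in>I. \<Sum>m\<in>I. ?f j n m)"
    unfolding e inner_scaleC by (rule refl)
  also have "\<dots> = (\<Sum>n\<in>I. \<Sum>j\<in>J. \<Sum>m\<in>I. ?f j n m)" by (rule sum.swap)
  also have "\<dots> = (\<Sum>n\<in>I. \<Sum>m\<in>I. \<Sum>j\<in>J. ?f j n m)" by (rule sum.cong[OF refl sum.swap])
  also have "\<dots> = (\<Sum>n\<in>I. \<Sum>m\<in>I. Re (\<Sum>j\<in>J. c j n * cnj (c j m)) * inner (x n) (x m)
        + Im (\<Sum>j\<in>J. c j n * cnj (c j m)) * inner (\<i> *\<^sub>C x n) (x m))"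
    by (intro sum.cong refl) (simp only: sum.distrib sum_distrib_right Re_sum Im_sum)
  also have "\<dots> = (\<Sum>n\<in>I. \<Sum>m\<in>I. if n = m then C * inner (x n) (x m) else 0)"
    by (intro sum.cong refl) (simp add: orth)
  also have "\<dots> = (\<Sum>n\<in>I. C * (norm (x n))\<^sup>2)"
    using fin by (intro sum.cong refl) (simp add: power2_norm_eq_inner)
  finally show ?thesis by (simp add: sum_distrib_left)
qed

lemma window_dvd_eq:
  fixes n m a P :: int
  assumes "n \<in> {a..<a+P}" "m \<in> {a..<a+P}" "P dvd (m - n)"
  shows "n = m"
proof (rule ccontr)
  assume "n \<noteq> m"
  hence "m - n \<noteq> 0" by simp
  from dvd_imp_le_int[OF this assms(3)] have "\<bar>P\<bar> \<le> \<bar>m - n\<bar>" .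
  thus False using assms(1,2) by auto
qed

lemma ee_orth_window:
  assumes "P > 0" "n \<in> {a..<a+P}" "m \<in> {a..<a+P}"
  shows "(\<Sum>s\<in>{b..<b+P}. ee P (s * (m - n))) = (if n = m then complex_of_real (of_int P) else 0)"
proof -
  have "(\<Sum>s\<in>{b..<b+P}. ee P (s * (m - n))) = (\<Sum>s\<in>{b..<b+P}. ee P ((m - n) * s))"
    by (simp add: mult.commute)
  also have "\<dots> = (if P dvd (m - n) then of_int P else 0)" by (rule ee_orth[OF assms(1)])
  also have "\<dots> = (if n = m then complex_of_real (of_int P) else 0)"
    using window_dvd_eq[OF assms(2,3)] by auto
  finally show ?thesis .
qed

lemma ee_mul_cnj: "ee P (u * n) * cnj (ee P (u * m)) = ee P (u * (n - m))"
  by (simp add: ee_cnj ee_add[symmetric] algebra_simps)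


lemma sum_shift_int: "(\<Sum>n\<in>{a..<b}. f (n+1)) = (\<Sum>n\<in>{a+1..<b+1::int}. f n)"
  by (rule sum.reindex_bij_witness[where i="\<lambda>n. n - 1" and j="\<lambda>n. n+1"]) auto

lemma sum_window_shift:
  fixes f :: "int \<Rightarrow> 'a::comm_monoid_add"
  assumes "P > 0" "f a = 0" "f (a+P) = 0"
  shows "(\<Sum>n\<in>{a+1..<a+P+1}. f n) = (\<Sum>n\<in>{a..<a+P}. f n)"
proof -
  have e: "\<And>i. a \<le> i \<Longrightarrow> \<not> a + 1 \<le> i \<Longrightarrow> i = a" by linarith
  have "(\<Sum>n\<in>{a+1..<a+P}. f n) = (\<Sum>n\<in>{a+1..<a+P+1}. f n)"
    by (rule sum.mono_neutral_left) (use assms in auto)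
  moreover have "(\<Sum>n\<in>{a+1..<a+P}. f n) = (\<Sum>n\<in>{a..<a+P}. f n)"
  proof (rule sum.mono_neutral_left)
    show "\<forall>i\<in>{a..<a + P} - {a + 1..<a + P}. f i = 0"
    proof
      fix i assume "i \<in> {a..<a + P} - {a + 1..<a + P}"
      hence "i = a" using e assms(1) by auto
      thus "f i = 0" using assms by simp
    qed
  qed auto
  ultimately show ?thesis by simp
qed

lemma ee_cnj_mul: "ee P (-(j*n)) * cnj (ee P (-(j*m))) = ee P (j * (m - n))"
proof -
  have "ee P (-(j*n)) * cnj (ee P (-(j*m))) = ee P (-(j*n)) * ee P (j*m)" by (simp add: ee_cnj)
  also have "\<dots> = ee P (-(j*n) + j*m)" by (rule ee_add[symmetric])
  also have "\<dots> = ee P (j*(m-n))" by (simp add: algebra_simps)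
  finally show ?thesis .
qed

locale opset =
  fixes A :: "'h::complex_hilbert \<Rightarrow> 'h" and \<rho> :: real
  assumes bcl: "bounded_clinear A" and rpos: "\<rho> > 0" and spec: "spectrum A \<inter> sphere 0 \<rho> = {}"
begin

abbreviation "M \<equiv> M_rho A \<rho>"

definition Tf :: "(int \<Rightarrow> 'h) \<Rightarrow> int \<Rightarrow> 'h" where
  "Tf v n = \<rho> *\<^sub>R v (n+1) - A (v n)"

definition zz :: "int \<Rightarrow> int \<Rightarrow> complex" where
  "zz P j = complex_of_real \<rho> * ee P j"

lemma zz_norm: "cmod (zz P j) = \<rho>"
  using rpos by (simp add: zz_def norm_mult)

lemma M_nonneg: "0 \<le> M"
  using M_rho_nonneg[OF spec] rpos by simp

lemma R_bound: "norm (resolvent A (zz P j) y) \<le> M * norm y"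
  by (rule resolvent_norm_le[OF spec zz_norm])

lemma zz_notin: "zz P j \<notin> spectrum A"
  using spec zz_norm[of P j] by auto

lemma R_left: "resolvent A (zz P j) (zminus (zz P j) A y) = y"
  using resolvent_props[OF zz_notin] by blast

lemma R_right: "zminus (zz P j) A (resolvent A (zz P j) y) = y"
  using resolvent_props[OF zz_notin] by blast

lemma sq_le_M: "(norm (resolvent A (zz P j) y))\<^sup>2 \<le> M\<^sup>2 * (norm y)\<^sup>2"
proof -
  have "(norm (resolvent A (zz P j) y))\<^sup>2 \<le> (M * norm y)\<^sup>2"
    by (rule power_mono[OF R_bound]) simp
  thus ?thesis by (simp add: power_mult_distrib)
qed

lemma LB_fin:
  assumes P: "P > 0" and supp: "\<And>n. n \<notin> {a+1..<a+P} \<Longrightarrow> v n = 0"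
  shows "(\<Sum>n\<in>{a..<a+P}. (norm (v n))\<^sup>2) \<le> M\<^sup>2 * (\<Sum>n\<in>{a..<a+P}. (norm (Tf v n))\<^sup>2)"
proof -
  let ?I = "{a..<a+P}" and ?J = "{0..<P}"
  define c where "c j n = ee P (- (j * n))" for j n
  define V where "V j = (\<Sum>n\<in>?I. c j n *\<^sub>C v n)" for j
  define W where "W j = (\<Sum>n\<in>?I. c j n *\<^sub>C Tf v n)" for j
  have orth: "(\<Sum>j\<in>?J. c j n * cnj (c j m)) = (if n = m then complex_of_real (of_int P) else 0)"
    if "n \<in> ?I" "m \<in> ?I" for n m
  proof -
    have "(\<Sum>j\<in>?J. c j n * cnj (c j m)) = (\<Sum>j\<in>{0..<0+P}. ee P (j * (m - n)))"
      unfolding c_def by (intro sum.cong) (simp, rule ee_cnj_mul)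
    also have "\<dots> = (if n = m then complex_of_real (of_int P) else 0)"
      by (rule ee_orth_window[OF P that])
    finally show ?thesis .
  qed
  have PV: "(\<Sum>j\<in>?J. (norm (V j))\<^sup>2) = of_int P * (\<Sum>n\<in>?I. (norm (v n))\<^sup>2)"
    unfolding V_def by (rule parseval_gen) (auto simp: orth)
  have PW: "(\<Sum>j\<in>?J. (norm (W j))\<^sup>2) = of_int P * (\<Sum>n\<in>?I. (norm (Tf v n))\<^sup>2)"
    unfolding W_def by (rule parseval_gen) (auto simp: orth)
  have WV: "W j = zminus (zz P j) A (V j)" for j
  proof -
    have s2: "(\<Sum>n\<in>?I. c j n *\<^sub>C A (v n)) = A (V j)"
      by (simp add: V_def bcl_sum[OF bcl] bcl_scaleC[OF bcl])
    have "(\<Sum>n\<in>?I. c j n *\<^sub>C (\<rho> *\<^sub>R v (n+1))) = (\<Sum>n\<in>?I. zz P j *\<^sub>C (c j (n+1) *\<^sub>C v (n+1)))"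
    proof (intro sum.cong refl)
      fix n
      have "c j n * complex_of_real \<rho> = zz P j * c j (n+1)"
        by (simp add: c_def zz_def ee_add[symmetric] algebra_simps)
      thus "c j n *\<^sub>C (\<rho> *\<^sub>R v (n+1)) = zz P j *\<^sub>C (c j (n+1) *\<^sub>C v (n+1))"
        by (simp add: scaleC_scaleR_left scaleC_scaleC)
    qed
    also have "\<dots> = zz P j *\<^sub>C (\<Sum>n\<in>?I. c j (n+1) *\<^sub>C v (n+1))" by (simp add: scaleC_sum_right)
    also have "(\<Sum>n\<in>?I. c j (n+1) *\<^sub>C v (n+1)) = (\<Sum>n\<in>{a+1..<a+P+1}. c j n *\<^sub>C v n)"
      by (rule sum_shift_int)
    also have "\<dots> = V j" unfolding V_def
      by (rule sum_window_shift[OF P]) (simp_all add: supp)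
    finally have s1: "(\<Sum>n\<in>?I. c j n *\<^sub>C (\<rho> *\<^sub>R v (n+1))) = zz P j *\<^sub>C V j" .
    have "W j = (\<Sum>n\<in>?I. c j n *\<^sub>C (\<rho> *\<^sub>R v (n+1))) - (\<Sum>n\<in>?I. c j n *\<^sub>C A (v n))"
      by (simp add: W_def Tf_def scaleC_diff_right sum_subtractf)
    thus ?thesis using s1 s2 by (simp add: zminus_def)
  qed
  have VW: "(norm (V j))\<^sup>2 \<le> M\<^sup>2 * (norm (W j))\<^sup>2" for j
    using sq_le_M[of P j "W j"] by (simp add: WV R_left)
  have "(\<Sum>j\<in>?J. (norm (V j))\<^sup>2) \<le> M\<^sup>2 * (\<Sum>j\<in>?J. (norm (W j))\<^sup>2)"
    unfolding sum_distrib_left by (rule sum_mono[OF VW])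
  hence "of_int P * (\<Sum>n\<in>?I. (norm (v n))\<^sup>2) \<le> of_int P * (M\<^sup>2 * (\<Sum>n\<in>?I. (norm (Tf v n))\<^sup>2))"
    unfolding PV PW by (simp add: algebra_simps)
  thus ?thesis using P by simp
qed

end


lemma pigeon_min:
  fixes f :: "'b \<Rightarrow> real"
  assumes "finite S" "S \<noteq> {}"
  shows "\<exists>x\<in>S. of_nat (card S) * f x \<le> sum f S"
proof -
  let ?m = "Min (f ` S)"
  have "?m \<in> f ` S" using assms by simp
  then obtain x where x: "x \<in> S" "f x = ?m" by auto
  have "of_nat (card S) * f x = (\<Sum>y\<in>S. f x)" by simp
  also have "\<dots> \<le> sum f S" using assms x by (intro sum_mono) simp
  finally show ?thesis using x by blast
qed

lemma scaleC_if_real: "(if b then complex_of_real r else 0) *\<^sub>C (x::'a::complex_hilbert) = (if b then r *\<^sub>R x else 0)"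
  by (simp add: scaleC_of_real)

context opset
begin

lemma DR_fin:
  fixes K Q :: int and g :: "int \<Rightarrow> 'h"
  assumes K: "K \<ge> 0" and Q: "Q > 0" and supp: "\<And>m. m \<notin> {-K..K} \<Longrightarrow> g m = 0"
  shows "\<exists>v y n0 n1. n1 < n0 \<and> (\<forall>n. n \<notin> {n1..n0} \<longrightarrow> v n = 0) \<and>
           (\<forall>n. Tf v n - g n = (if n = n0 then - y else if n = n1 then y else 0)) \<and>
           (\<exists>w. y = A w \<and> of_int Q * (norm w)\<^sup>2 \<le> M\<^sup>2 * (\<Sum>m\<in>{-K..K}. (norm (g m))\<^sup>2))"
proof -
  define P where "P = 2*K + Q + 1"
  have P: "P > 0" using K Q by (simp add: P_def)
  let ?J = "{0..<P}"
  let ?Sg = "\<Sum>m\<in>{-K..K}. (norm (g m))\<^sup>2"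
  define G where "G j = (\<Sum>m\<in>{-K..K}. ee P (- (j * m)) *\<^sub>C g m)" for j
  define y where "y j = resolvent A (zz P j) (G j)" for j
  define w where "w n = inverse (of_int P) *\<^sub>R (\<Sum>j\<in>?J. ee P (n * j) *\<^sub>C y j)" for n
  have W1: "w (n + P) = w n" for n
  proof -
    have "ee P ((n + P) * j) = ee P (n * j)" for j
      using P by (simp add: distrib_right ee_add ee_period)
    thus ?thesis by (simp add: w_def)
  qed
  have W2: "Tf w n = inverse (of_int P) *\<^sub>R (\<Sum>j\<in>?J. ee P (n * j) *\<^sub>C G j)" for n
  proof -
    have a: "\<rho> *\<^sub>R w (n+1) = inverse (of_int P) *\<^sub>R (\<Sum>j\<in>?J. ee P (n * j) *\<^sub>C (zz P j *\<^sub>C y j))"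
    proof -
      have eqj: "\<rho> *\<^sub>R (ee P ((n+1) * j) *\<^sub>C y j) = ee P (n * j) *\<^sub>C (zz P j *\<^sub>C y j)" for j
      proof -
        have "complex_of_real \<rho> * ee P ((n+1) * j) = ee P (n * j) * zz P j"
          by (simp add: zz_def distrib_right ee_add algebra_simps)
        thus ?thesis by (simp add: scaleR_scaleC scaleC_scaleC)
      qed
      have "\<rho> *\<^sub>R w (n+1) = inverse (of_int P) *\<^sub>R (\<rho> *\<^sub>R (\<Sum>j\<in>?J. ee P ((n+1) * j) *\<^sub>C y j))"
        unfolding w_def by (simp only: scaleR_scaleR mult.commute)
      also have "\<dots> = inverse (of_int P) *\<^sub>R (\<Sum>j\<in>?J. \<rho> *\<^sub>R (ee P ((n+1) * j) *\<^sub>C y j))"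
        by (simp only: scaleR_sum_right)
      also have "\<dots> = inverse (of_int P) *\<^sub>R (\<Sum>j\<in>?J. ee P (n * j) *\<^sub>C (zz P j *\<^sub>C y j))"
        by (simp only: eqj)
      finally show ?thesis .
    qed
    have b: "A (w n) = inverse (of_int P) *\<^sub>R (\<Sum>j\<in>?J. ee P (n * j) *\<^sub>C A (y j))"
      by (simp add: w_def bcl_scaleR[OF bcl] bcl_sum[OF bcl] bcl_scaleC[OF bcl])
    have "Tf w n = inverse (of_int P) *\<^sub>R (\<Sum>j\<in>?J. ee P (n * j) *\<^sub>C (zz P j *\<^sub>C y j - A (y j)))"
      unfolding Tf_def a b by (simp add: scaleC_diff_right sum_subtractf scaleR_diff_right)
    also have "\<dots> = inverse (of_int P) *\<^sub>R (\<Sum>j\<in>?J. ee P (n * j) *\<^sub>C G j)"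
      using R_right by (simp add: y_def zminus_def)
    finally show ?thesis .
  qed
  have W2': "Tf w n = g n" if win: "n \<in> {b..<b+P}" "{-K..K} \<subseteq> {b..<b+P}" for n b
  proof -
    have "(\<Sum>j\<in>?J. ee P (n * j) *\<^sub>C G j) = (\<Sum>j\<in>?J. \<Sum>m\<in>{-K..K}. ee P (j * (n - m)) *\<^sub>C g m)"
    proof (intro sum.cong refl)
      fix j
      have "ee P (n * j) *\<^sub>C G j = (\<Sum>m\<in>{-K..K}. (ee P (n * j) * ee P (- (j * m))) *\<^sub>C g m)"
        by (simp add: G_def scaleC_sum_right scaleC_scaleC)
      also have "\<dots> = (\<Sum>m\<in>{-K..K}. ee P (j * (n - m)) *\<^sub>C g m)"
        by (intro sum.cong refl) (simp add: ee_add[symmetric] algebra_simps)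
      finally show "ee P (n * j) *\<^sub>C G j = (\<Sum>m\<in>{-K..K}. ee P (j * (n - m)) *\<^sub>C g m)" .
    qed
    also have "\<dots> = (\<Sum>m\<in>{-K..K}. (\<Sum>j\<in>?J. ee P (j * (n - m))) *\<^sub>C g m)"
      by (subst sum.swap) (simp add: scaleC_sum_left)
    also have "\<dots> = (\<Sum>m\<in>{-K..K}. (if m = n then complex_of_real (of_int P) else 0) *\<^sub>C g m)"
    proof (intro sum.cong refl)
      fix m assume "m \<in> {-K..K}"
      hence mw: "m \<in> {b..<b+P}" using win by blast
      have "(\<Sum>j\<in>{0..<0+P}. ee P (j * (n - m))) = (if m = n then complex_of_real (of_int P) else 0)"
        by (rule ee_orth_window[OF P mw win(1)])
      thus "(\<Sum>j\<in>?J. ee P (j * (n - m))) *\<^sub>C g m = (if m = n then complex_of_real (of_int P) else 0) *\<^sub>C g m"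
        by simp
    qed
    also have "\<dots> = (\<Sum>m\<in>{-K..K}. if m = n then of_int P *\<^sub>R g m else 0)"
      by (simp only: scaleC_if_real)
    also have "\<dots> = of_int P *\<^sub>R g n"
      using supp[of n] by (simp add: sum.delta)
    finally show ?thesis using W2[of n] P by simp
  qed
  have W3: "(\<Sum>n\<in>{b..<b+P}. (norm (w n))\<^sup>2) \<le> M\<^sup>2 * ?Sg" for b
  proof -
    have PU: "(\<Sum>n\<in>{b..<b+P}. (norm (\<Sum>j\<in>?J. ee P (n * j) *\<^sub>C y j))\<^sup>2) = of_int P * (\<Sum>j\<in>?J. (norm (y j))\<^sup>2)"
    proof (rule parseval_gen)
      fix j j' assume "j \<in> ?J" "j' \<in> ?J"
      hence jj: "j \<in> {0..<0+P}" "j' \<in> {0..<0+P}" by auto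
      have "(\<Sum>n\<in>{b..<b+P}. ee P (n * j) * cnj (ee P (n * j'))) = (\<Sum>n\<in>{b..<b+P}. ee P (n * (j - j')))"
        by (simp add: ee_mul_cnj)
      also have "\<dots> = (if j' = j then complex_of_real (of_int P) else 0)"
        by (rule ee_orth_window[OF P jj(2) jj(1)])
      finally show "(\<Sum>n\<in>{b..<b+P}. ee P (n * j) * cnj (ee P (n * j'))) = (if j = j' then complex_of_real (of_int P) else 0)"
        by auto
    qed simp
    have PG: "(\<Sum>j\<in>?J. (norm (G j))\<^sup>2) = of_int P * ?Sg"
      unfolding G_def
    proof (rule parseval_gen)
      fix m m' assume "m \<in> {-K..K}" "m' \<in> {-K..K}"
      hence mm: "m \<in> {-K..<-K+P}" "m' \<in> {-K..<-K+P}" using Q by (auto simp: P_def)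
      have "(\<Sum>j\<in>?J. ee P (- (j * m)) * cnj (ee P (- (j * m')))) = (\<Sum>j\<in>{0..<0+P}. ee P (j * (m' - m)))"
        by (intro sum.cong) (simp, rule ee_cnj_mul)
      also have "\<dots> = (if m = m' then complex_of_real (of_int P) else 0)"
        by (rule ee_orth_window[OF P mm])
      finally show "(\<Sum>j\<in>?J. ee P (- (j * m)) * cnj (ee P (- (j * m')))) = (if m = m' then complex_of_real (of_int P) else 0)" .
    qed simp
    have "(\<Sum>n\<in>{b..<b+P}. (norm (w n))\<^sup>2) = (inverse (of_int P))\<^sup>2 * (\<Sum>n\<in>{b..<b+P}. (norm (\<Sum>j\<in>?J. ee P (n * j) *\<^sub>C y j))\<^sup>2)"
      using P by (simp add: w_def sum_distrib_left power_mult_distrib)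
    also have "\<dots> = inverse (of_int P) * (\<Sum>j\<in>?J. (norm (y j))\<^sup>2)"
      unfolding PU using P by (simp add: power2_eq_square)
    also have "\<dots> \<le> inverse (of_int P) * (M\<^sup>2 * (\<Sum>j\<in>?J. (norm (G j))\<^sup>2))"
      using P by (intro mult_left_mono) (auto simp: sum_distrib_left y_def intro!: sum_mono sq_le_M)
    also have "\<dots> = M\<^sup>2 * ?Sg" using P by (simp add: PG)
    finally show ?thesis .
  qed
  \<comment> \<open>choose the cut point\<close>
  have "(\<Sum>n\<in>{K+1..K+Q}. (norm (w n))\<^sup>2) \<le> (\<Sum>n\<in>{-K..<-K+P}. (norm (w n))\<^sup>2)"
    using K by (intro sum_mono2) (auto simp: P_def)
  also have "\<dots> \<le> M\<^sup>2 * ?Sg" by (rule W3)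
  finally have sumQ: "(\<Sum>n\<in>{K+1..K+Q}. (norm (w n))\<^sup>2) \<le> M\<^sup>2 * ?Sg" .
  obtain n0 where n0: "n0 \<in> {K+1..K+Q}" "of_nat (card {K+1..K+Q}) * (norm (w n0))\<^sup>2 \<le> (\<Sum>n\<in>{K+1..K+Q}. (norm (w n))\<^sup>2)"
    using pigeon_min[of "{K+1..K+Q}" "\<lambda>n. (norm (w n))\<^sup>2"] Q by auto
  have cardQ: "of_nat (card {K+1..K+Q}) = (of_int Q :: real)" using Q by simp
  have bound: "of_int Q * (norm (w n0))\<^sup>2 \<le> M\<^sup>2 * ?Sg" using n0(2) sumQ unfolding cardQ by linarith
  define v where "v n = (if n \<in> {n0-P+1..n0} then w n else 0)" for n
  have gz: "g n = 0" if "n < -K \<or> n > K" for n using supp that by auto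
  have winc: "{-K..K} \<subseteq> {n0-P+1..<n0-P+1+P}" using n0(1) by (auto simp: P_def)
  have Tn0: "\<rho> *\<^sub>R w (n0+1) = A (w n0)"
  proof -
    have "Tf w n0 = g n0" by (rule W2'[OF _ winc]) (use P in auto)
    moreover have "g n0 = 0" using gz n0(1) by auto
    ultimately show ?thesis by (simp add: Tf_def)
  qed
  have eq: "Tf v n - g n = (if n = n0 then - A (w n0) else if n = n0 - P then A (w n0) else 0)" for n
  proof -
    consider "n = n0" | "n = n0 - P" | "n \<in> {n0-P+1..n0-1}" | "n < n0 - P \<or> n > n0"
      by (metis atLeastAtMost_iff linorder_not_le not_less_iff_gr_or_eq zle_diff1_eq add1_zle_eq)
    thus ?thesis
    proof cases
      case 1
      thus ?thesis using gz n0(1) P by (simp add: Tf_def v_def)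
    next
      case 2
      have "w (n0 - P + 1) = w (n0 + 1)" using W1[of "n0 - P + 1"] by (simp add: algebra_simps)
      moreover have "g (n0 - P) = 0" using gz n0(1) by (auto simp: P_def)
      ultimately show ?thesis using 2 P Tn0 by (simp add: Tf_def v_def bcl_zero[OF bcl])
    next
      case 3
      hence "n \<in> {n0-P+1..<n0-P+1+P}" by auto
      from W2'[OF this winc] have "Tf w n = g n" .
      thus ?thesis using 3 P by (simp add: Tf_def v_def)
    next
      case 4
      hence "g n = 0" using gz n0(1) by (auto simp: P_def)
      thus ?thesis using 4 P by (auto simp: Tf_def v_def bcl_zero[OF bcl])
    qed
  qed
  show ?thesis
    apply (rule exI[of _ v], rule exI[of _ "A (w n0)"], rule exI[of _ n0], rule exI[of _ "n0 - P"])
    using P eq bound by (auto simp: v_def)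
qed

end


lemma l2set_shift:
  assumes "f \<in> l2set"
  shows "(\<lambda>n. f (n+1)) \<in> l2set" and "infsum (\<lambda>n. (norm (f (n+1)))\<^sup>2) UNIV = infsum (\<lambda>n. (norm (f n))\<^sup>2) UNIV"
proof -
  have "(\<lambda>n. (norm (f n))\<^sup>2) summable_on UNIV \<longleftrightarrow> (\<lambda>n. (norm (f (n+1)))\<^sup>2) summable_on UNIV"
    by (rule summable_on_reindex_bij_witness[where i="\<lambda>n. n+1" and j="\<lambda>n. n - 1"]) auto
  thus "(\<lambda>n. f (n+1)) \<in> l2set" using assms by (simp add: l2set_def)
  show "infsum (\<lambda>n. (norm (f (n+1)))\<^sup>2) UNIV = infsum (\<lambda>n. (norm (f n))\<^sup>2) UNIV"
    by (rule infsum_reindex_bij_witness[where i="\<lambda>n. n - 1" and j="\<lambda>n. n+1"]) auto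
qed

lemma l2set_comp:
  assumes "f \<in> l2set" "\<And>x. norm (B x) \<le> K * norm x" "K \<ge> 0"
  shows "(\<lambda>n. B (f n)) \<in> l2set" and "infsum (\<lambda>n. (norm (B (f n)))\<^sup>2) UNIV \<le> K\<^sup>2 * infsum (\<lambda>n. (norm (f n))\<^sup>2) UNIV"
proof -
  have le: "(norm (B (f n)))\<^sup>2 \<le> K\<^sup>2 * (norm (f n))\<^sup>2" for n
  proof -
    have "(norm (B (f n)))\<^sup>2 \<le> (K * norm (f n))\<^sup>2" by (rule power_mono[OF assms(2)]) simp
    thus ?thesis by (simp add: power_mult_distrib)
  qed
  have S: "(\<lambda>n. K\<^sup>2 * (norm (f n))\<^sup>2) summable_on UNIV"
    using assms(1) by (intro summable_on_cmult_right) (simp add: l2set_def)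
  have S2: "(\<lambda>n. (norm (B (f n)))\<^sup>2) summable_on UNIV"
    by (rule summable_on_comparison_test[OF S]) (simp_all add: le)
  thus "(\<lambda>n. B (f n)) \<in> l2set" by (simp add: l2set_def)
  have "infsum (\<lambda>n. (norm (B (f n)))\<^sup>2) UNIV \<le> infsum (\<lambda>n. K\<^sup>2 * (norm (f n))\<^sup>2) UNIV"
    by (rule infsum_mono[OF S2 S]) (simp add: le)
  also have "\<dots> = K\<^sup>2 * infsum (\<lambda>n. (norm (f n))\<^sup>2) UNIV" by (simp add: infsum_cmult_right')
  finally show "infsum (\<lambda>n. (norm (B (f n)))\<^sup>2) UNIV \<le> K\<^sup>2 * infsum (\<lambda>n. (norm (f n))\<^sup>2) UNIV" .
qed

lemma l2set_finsupp:
  assumes "finite S" "\<And>n. n \<notin> S \<Longrightarrow> f n = 0"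
  shows "f \<in> l2set" and "infsum (\<lambda>n. (norm (f n))\<^sup>2) UNIV = (\<Sum>n\<in>S. (norm (f n))\<^sup>2)"
proof -
  have eq: "infsum (\<lambda>n. (norm (f n))\<^sup>2) UNIV = infsum (\<lambda>n. (norm (f n))\<^sup>2) S"
    by (rule infsum_cong_neutral) (use assms in auto)
  have "finite {n \<in> UNIV. (norm (f n))\<^sup>2 \<noteq> 0}"
    by (rule finite_subset[OF _ assms(1)]) (use assms in auto)
  hence "(\<lambda>n. (norm (f n))\<^sup>2) summable_on UNIV" by (rule finite_nonzero_values_imp_summable_on)
  thus "f \<in> l2set" by (simp add: l2set_def)
  show "infsum (\<lambda>n. (norm (f n))\<^sup>2) UNIV = (\<Sum>n\<in>S. (norm (f n))\<^sup>2)" using eq assms(1) by simp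
qed

lemma norm_finsupp:
  assumes "finite S" "\<And>n. n \<notin> S \<Longrightarrow> f n = 0"
  shows "(norm (Abs_l2 f))\<^sup>2 = (\<Sum>n\<in>S. (norm (f n))\<^sup>2)"
  using l2set_finsupp[OF assms] by (simp add: norm_l2_sq vec_Abs)

definition trunc :: "int \<Rightarrow> 'a::real_inner l2 \<Rightarrow> 'a l2" where
  "trunc N x = Abs_l2 (\<lambda>n. if n \<in> {-N..N} then vec x n else 0)"

lemma vec_trunc: "vec (trunc N x) = (\<lambda>n. if n \<in> {-N..N} then vec x n else 0)"
  unfolding trunc_def by (rule vec_Abs, rule l2set_finsupp(1)[of "{-N..N}"]) auto

lemma trunc_approx:
  fixes x :: "'a::real_inner l2"
  assumes "e > 0"
  shows "\<exists>N\<ge>0. norm (x - trunc N x) < e"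
proof -
  define f where "f n = (norm (vec x n))\<^sup>2" for n
  have fs: "f summable_on UNIV" unfolding f_def by (rule l2_sq_summable[OF vec_l2set])
  have e2: "e\<^sup>2 / 2 > 0" using assms by simp
  obtain F where F: "finite F" "dist (sum f F) (infsum f UNIV) \<le> e\<^sup>2 / 2"
    using infsum_finite_approximation[OF fs e2] by auto
  define N where "N = (\<Sum>n\<in>F. \<bar>n\<bar>)"
  have N0: "N \<ge> 0" by (simp add: N_def sum_nonneg)
  have FN: "F \<subseteq> {-N..N}"
  proof
    fix n assume "n \<in> F"
    hence "\<bar>n\<bar> \<le> N" unfolding N_def by (rule member_le_sum) (simp_all add: F(1))
    thus "n \<in> {-N..N}" by auto
  qed
  let ?W = "{-N..N}"
  define g where "g n = (if n \<in> ?W then 0 else f n)" for n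
  define h where "h n = (if n \<in> ?W then f n else 0)" for n
  have gs: "g summable_on UNIV"
    by (rule summable_on_comparison_test[OF fs]) (auto simp: g_def f_def)
  have hs: "h summable_on UNIV"
    by (rule finite_nonzero_values_imp_summable_on, rule finite_subset[of _ ?W]) (auto simp: h_def)
  have hsum: "infsum h UNIV = sum f ?W"
  proof -
    have "infsum h UNIV = infsum f ?W" by (rule infsum_cong_neutral) (auto simp: h_def)
    thus ?thesis by simp
  qed
  have "infsum f UNIV = infsum (\<lambda>n. g n + h n) UNIV" by (intro infsum_cong) (simp add: g_def h_def f_def)
  also have "\<dots> = infsum g UNIV + sum f ?W" using infsum_add[OF gs hs] hsum by simp
  finally have tot: "infsum f UNIV = infsum g UNIV + sum f ?W" .
  have "sum f F \<le> sum f ?W" using FN by (intro sum_mono2) (auto simp: f_def)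
  moreover have "sum f F \<le> infsum f UNIV" using F(1) fs by (intro finite_sum_le_infsum) (auto simp: f_def)
  ultimately have gsmall: "infsum g UNIV \<le> e\<^sup>2 / 2" using F(2) tot by (simp add: dist_real_def)
  have "(norm (x - trunc N x))\<^sup>2 = infsum g UNIV"
    unfolding norm_l2_sq by (intro infsum_cong) (simp add: vec_minus vec_trunc g_def f_def)
  also have "\<dots> < e\<^sup>2"
  proof -
    have "e\<^sup>2 > 0" using assms by simp
    thus ?thesis using gsmall by linarith
  qed
  finally have "(norm (x - trunc N x))\<^sup>2 < e\<^sup>2" .
  hence "norm (x - trunc N x) < e" by (rule power_less_imp_less_base) (use assms in simp)
  thus ?thesis using N0 by blast
qed

context opset
begin

definition KA :: real where "KA = (SOME K. K \<ge> 0 \<and> (\<forall>x. norm (A x) \<le> K * norm x))"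

lemma KA: "KA \<ge> 0" "norm (A x) \<le> KA * norm x"
proof -
  have "\<exists>K. K \<ge> 0 \<and> (\<forall>x. norm (A x) \<le> K * norm x)" using bcl_bound[OF bcl] by blast
  from someI_ex[OF this] show "KA \<ge> 0" "norm (A x) \<le> KA * norm x" unfolding KA_def by auto
qed

lemma Tf_l2: "f \<in> l2set \<Longrightarrow> Tf f \<in> l2set"
  unfolding Tf_def
  by (intro l2set_diff l2set_scale l2set_shift(1) l2set_comp(1)[OF _ KA(2) KA(1)])

definition Tl :: "'h l2 \<Rightarrow> 'h l2" where "Tl x = Abs_l2 (Tf (vec x))"

lemma vec_Tl: "vec (Tl x) = Tf (vec x)"
  unfolding Tl_def by (rule vec_Abs[OF Tf_l2[OF vec_l2set]])

lemma Tl_add: "Tl (x + y) = Tl x + Tl y"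
  by (rule l2_eqI) (simp add: vec_Tl vec_simps Tf_def bcl_add[OF bcl] scaleR_add_right algebra_simps)

lemma Tl_scaleR: "Tl (c *\<^sub>R x) = c *\<^sub>R Tl x"
  by (rule l2_eqI) (simp add: vec_Tl vec_simps Tf_def bcl_scaleR[OF bcl] scaleR_diff_right)

lemma Tl_norm: "norm (Tl x) \<le> (\<rho> + KA) * norm x"
proof -
  define Sh where "Sh = Abs_l2 (\<lambda>n. vec x (n+1))"
  define Ac where "Ac = Abs_l2 (\<lambda>n. A (vec x n))"
  have sh: "(\<lambda>n. vec x (n+1)) \<in> l2set" by (rule l2set_shift(1)[OF vec_l2set])
  have ac: "(\<lambda>n. A (vec x n)) \<in> l2set" by (rule l2set_comp(1)[OF vec_l2set KA(2) KA(1)])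
  have "Tl x = \<rho> *\<^sub>R Sh - Ac"
    by (rule l2_eqI) (simp add: vec_Tl vec_simps Sh_def Ac_def vec_Abs sh ac Tf_def)
  hence "norm (Tl x) \<le> norm (\<rho> *\<^sub>R Sh) + norm Ac" by (metis norm_triangle_ineq4)
  also have "norm (\<rho> *\<^sub>R Sh) = \<rho> * norm x"
  proof -
    have "(norm Sh)\<^sup>2 = (norm x)\<^sup>2"
      unfolding norm_l2_sq Sh_def vec_Abs[OF sh] by (rule l2set_shift(2)[OF vec_l2set])
    hence "norm Sh = norm x" by (simp add: power2_eq_iff_nonneg)
    thus ?thesis using rpos by simp
  qed
  also have "norm Ac \<le> KA * norm x"
  proof -
    have "(norm Ac)\<^sup>2 \<le> KA\<^sup>2 * (norm x)\<^sup>2"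
      unfolding norm_l2_sq Ac_def vec_Abs[OF ac] by (rule l2set_comp(2)[OF vec_l2set KA(2) KA(1)])
    hence "(norm Ac)\<^sup>2 \<le> (KA * norm x)\<^sup>2" by (simp add: power_mult_distrib)
    thus ?thesis by (rule power2_le_imp_le) (simp add: KA(1))
  qed
  finally show ?thesis by (simp add: algebra_simps)
qed

lemma Tl_bl: "bounded_linear Tl"
  by (rule bounded_linear_intro[where K="\<rho> + KA"]) (simp add: Tl_add, simp add: Tl_scaleR, metis Tl_norm mult.commute)

lemma Tl_diff: "Tl (x - y) = Tl x - Tl y"
  by (rule l2_eqI) (simp add: vec_Tl vec_simps Tf_def bcl_diff[OF bcl] scaleR_diff_right)

lemma LB_fs:
  assumes N: "N \<ge> 0" and supp: "\<And>n. n \<notin> {-N..N} \<Longrightarrow> vec x n = 0"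
  shows "norm x \<le> M * norm (Tl x)"
proof -
  let ?a = "-N-1" and ?P = "2*N+3"
  have a1: "(\<Sum>n\<in>{?a..<?a+?P}. (norm (vec x n))\<^sup>2) \<le> M\<^sup>2 * (\<Sum>n\<in>{?a..<?a+?P}. (norm (Tf (vec x) n))\<^sup>2)"
    by (rule LB_fin) (use N supp in auto)
  have a2: "(norm x)\<^sup>2 = (\<Sum>n\<in>{?a..<?a+?P}. (norm (vec x n))\<^sup>2)"
  proof -
    have h: "\<And>n. n \<notin> {?a..<?a+?P} \<Longrightarrow> vec x n = 0" using supp by auto
    have "(norm (Abs_l2 (vec x)))\<^sup>2 = (\<Sum>n\<in>{?a..<?a+?P}. (norm (vec x n))\<^sup>2)"
      by (rule norm_finsupp) (auto intro: h)
    thus ?thesis by (simp add: vec_inverse)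
  qed
  have a3: "(\<Sum>n\<in>{?a..<?a+?P}. (norm (Tf (vec x) n))\<^sup>2) \<le> (norm (Tl x))\<^sup>2"
    using l2_finite_le[of "{?a..<?a+?P}" "Tl x"] by (simp add: vec_Tl)
  have "M\<^sup>2 * (\<Sum>n\<in>{?a..<?a+?P}. (norm (Tf (vec x) n))\<^sup>2) \<le> M\<^sup>2 * (norm (Tl x))\<^sup>2"
    by (rule mult_left_mono[OF a3]) simp
  hence "(norm x)\<^sup>2 \<le> M\<^sup>2 * (norm (Tl x))\<^sup>2" using a1 a2 by linarith
  hence "(norm x)\<^sup>2 \<le> (M * norm (Tl x))\<^sup>2" by (simp add: power_mult_distrib)
  thus ?thesis by (rule power2_le_imp_le) (simp add: M_nonneg)
qed

lemma LB: "norm x \<le> M * norm (Tl x)"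
proof (rule field_le_epsilon)
  fix e :: real assume e: "0 < e"
  define C where "C = M * (\<rho> + KA) + 1"
  have "0 \<le> M * (\<rho> + KA)" using M_nonneg rpos KA(1) by simp
  hence C: "C > 0" by (simp add: C_def)
  obtain N where N: "N \<ge> 0" "norm (x - trunc N x) < e / C"
    using trunc_approx[of "e / C" x] e C by auto
  have fs: "norm (trunc N x) \<le> M * norm (Tl (trunc N x))"
    by (rule LB_fs[OF N(1)]) (auto simp: vec_trunc)
  have "norm (Tl (trunc N x)) \<le> norm (Tl x) + norm (Tl (x - trunc N x))"
    using norm_triangle_ineq4[of "Tl x" "Tl (x - trunc N x)"] by (simp add: Tl_diff)
  also have "norm (Tl (x - trunc N x)) \<le> (\<rho> + KA) * norm (x - trunc N x)" by (rule Tl_norm)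
  finally have t1: "norm (Tl (trunc N x)) \<le> norm (Tl x) + (\<rho> + KA) * norm (x - trunc N x)" by simp
  have "norm x \<le> norm (trunc N x) + norm (x - trunc N x)"
    using norm_triangle_ineq[of "trunc N x" "x - trunc N x"] by simp
  also have "\<dots> \<le> M * (norm (Tl x) + (\<rho> + KA) * norm (x - trunc N x)) + norm (x - trunc N x)"
    using fs mult_left_mono[OF t1 M_nonneg] by linarith
  also have "\<dots> = M * norm (Tl x) + C * norm (x - trunc N x)" by (simp add: C_def algebra_simps)
  also have "\<dots> \<le> M * norm (Tl x) + e"
    using N(2) C by (simp add: pos_less_divide_eq mult.commute less_imp_le)
  finally show "norm x \<le> M * norm (Tl x) + e" .
qed

end


context opset
begin

lemma approx_range:
  assumes e: "e > 0"
  shows "\<exists>v. norm (Tl v - g) < e"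
proof -
  obtain N where N: "N \<ge> 0" "norm (g - trunc N g) < e/2" using trunc_approx[of "e/2" g] e by auto
  define gt where "gt = vec (trunc N g)"
  have gts: "\<And>m. m \<notin> {-N..N} \<Longrightarrow> gt m = 0" by (auto simp: gt_def vec_trunc)
  define Sg where "Sg = (\<Sum>m\<in>{-N..N}. (norm (gt m))\<^sup>2)"
  have Sg0: "Sg \<ge> 0" by (simp add: Sg_def sum_nonneg)
  define B where "B = KA\<^sup>2 * M\<^sup>2 * Sg"
  have B0: "B \<ge> 0" by (simp add: B_def Sg0)
  define Q where "Q = \<lceil>8 * B / e\<^sup>2\<rceil> + 1"
  have e2: "e\<^sup>2 > 0" using e by simp
  have c0: "0 \<le> 8 * B / e\<^sup>2" using B0 e2 by simp
  have cQ: "8 * B / e\<^sup>2 < of_int Q" unfolding Q_def by linarith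
  have Q: "Q > 0"
  proof -
    have "0 \<le> \<lceil>8 * B / e\<^sup>2\<rceil>" using c0 by simp
    thus ?thesis by (simp add: Q_def)
  qed
  have QB: "8 * B < of_int Q * e\<^sup>2" using cQ e2 by (simp add: pos_divide_less_eq)
  obtain v y n0 n1 where D: "n1 < n0" "\<forall>n. n \<notin> {n1..n0} \<longrightarrow> v n = 0"
      "\<forall>n. Tf v n - gt n = (if n = n0 then - y else if n = n1 then y else 0)"
      "\<exists>w. y = A w \<and> of_int Q * (norm w)\<^sup>2 \<le> M\<^sup>2 * Sg"
    using DR_fin[of N Q gt, OF N(1) Q gts] unfolding Sg_def by blast
  obtain w where w: "y = A w" "of_int Q * (norm w)\<^sup>2 \<le> M\<^sup>2 * Sg" using D(4) by blast
  have vs: "v \<in> l2set" by (rule l2set_finsupp(1)[of "{n1..n0}"]) (use D(2) in auto)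
  define vv where "vv = Abs_l2 v"
  have dv: "vec (Tl vv - trunc N g) = (\<lambda>n. if n = n0 then - y else if n = n1 then y else 0)"
    using D(3) by (simp add: vec_minus vec_Tl vv_def vec_Abs[OF vs] gt_def[symmetric])
  have nD: "(norm (Tl vv - trunc N g))\<^sup>2 = 2 * (norm y)\<^sup>2"
  proof -
    have "(norm (Tl vv - trunc N g))\<^sup>2 = infsum (\<lambda>n. (norm (vec (Tl vv - trunc N g) n))\<^sup>2) UNIV"
      by (rule norm_l2_sq)
    also have "\<dots> = (\<Sum>n\<in>{n0, n1}. (norm (vec (Tl vv - trunc N g) n))\<^sup>2)"
      by (rule l2set_finsupp(2)) (simp_all add: dv)
    also have "\<dots> = 2 * (norm y)\<^sup>2" using D(1) by (simp add: dv)
    finally show ?thesis .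
  qed
  have y2: "(norm y)\<^sup>2 \<le> KA\<^sup>2 * (norm w)\<^sup>2"
  proof -
    have "(norm y)\<^sup>2 \<le> (KA * norm w)\<^sup>2" unfolding w(1) by (rule power_mono[OF KA(2)]) simp
    thus ?thesis by (simp add: power_mult_distrib)
  qed
  have "of_int Q * (norm y)\<^sup>2 \<le> of_int Q * (KA\<^sup>2 * (norm w)\<^sup>2)"
    using y2 Q by (intro mult_left_mono) auto
  also have "\<dots> = KA\<^sup>2 * (of_int Q * (norm w)\<^sup>2)" by simp
  also have "\<dots> \<le> KA\<^sup>2 * (M\<^sup>2 * Sg)" by (rule mult_left_mono[OF w(2)]) simp
  also have "\<dots> = B" by (simp add: B_def)
  finally have Qy: "of_int Q * (norm y)\<^sup>2 \<le> B" .
  have "of_int Q * (norm (Tl vv - trunc N g))\<^sup>2 < of_int Q * (e/2)\<^sup>2"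
    using Qy QB nD by (simp add: power_divide)
  hence "(norm (Tl vv - trunc N g))\<^sup>2 < (e/2)\<^sup>2" using Q by simp
  hence n1: "norm (Tl vv - trunc N g) < e/2" by (rule power_less_imp_less_base) (use e in simp)
  have "norm (Tl vv - g) \<le> norm (Tl vv - trunc N g) + norm (trunc N g - g)"
    using norm_triangle_ineq[of "Tl vv - trunc N g" "trunc N g - g"] by simp
  also have "\<dots> < e" using n1 N(2) by (simp add: norm_minus_commute)
  finally show ?thesis by blast
qed

lemma Tl_surj: "\<exists>v. Tl v = g"
proof -
  have "\<forall>k::nat. \<exists>v. norm (Tl v - g) < 1 / (real k + 1)" using approx_range by simp
  then obtain vs where vs: "\<And>k. norm (Tl (vs k) - g) < 1 / (real k + 1)" by metis
  have C: "Cauchy vs"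
  proof (rule CauchyI)
    fix e :: real assume e: "0 < e"
    obtain N :: nat where N: "2 * M / e < real N" using reals_Archimedean2 by blast
    show "\<exists>N. \<forall>m\<ge>N. \<forall>n\<ge>N. norm (vs m - vs n) < e"
    proof (intro exI allI impI)
      fix m n assume m: "N \<le> m" and n: "N \<le> n"
      have im: "1 / (real m + 1) \<le> 1 / (real N + 1)" using m by (simp add: frac_le)
      have inn: "1 / (real n + 1) \<le> 1 / (real N + 1)" using n by (simp add: frac_le)
      have "norm (vs m - vs n) \<le> M * norm (Tl (vs m) - Tl (vs n))"
        using LB[of "vs m - vs n"] by (simp add: Tl_diff)
      also have "norm (Tl (vs m) - Tl (vs n)) \<le> norm (Tl (vs m) - g) + norm (Tl (vs n) - g)"
        using norm_triangle_ineq4[of "Tl (vs m) - g" "Tl (vs n) - g"] by simp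
      also have "\<dots> \<le> 2 / (real N + 1)" using vs[of m] vs[of n] im inn by simp
      finally have a: "norm (vs m - vs n) \<le> M * (2 / (real N + 1))"
        using M_nonneg by (simp add: mult_left_mono)
      have "2 * M < e * (real N + 1)"
      proof -
        have "2 * M < e * real N" using N e by (simp add: pos_divide_less_eq mult.commute)
        thus ?thesis using e by (simp add: algebra_simps)
      qed
      hence "M * (2 / (real N + 1)) < e" by (simp add: pos_divide_less_eq mult.commute)
      thus "norm (vs m - vs n) < e" using a by linarith
    qed
  qed
  then obtain v where v: "vs \<longlonglongrightarrow> v" using Cauchy_convergent_iff convergent_def by blast
  have l1: "(\<lambda>k. Tl (vs k)) \<longlonglongrightarrow> Tl v" by (rule bounded_linear.tendsto[OF Tl_bl v])
  have l2: "(\<lambda>k. Tl (vs k)) \<longlonglongrightarrow> g"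
  proof (rule LIMSEQ_I)
    fix r :: real assume r: "0 < r"
    obtain no :: nat where no: "inverse (real (Suc no)) < r"
      using reals_Archimedean[OF r] by blast
    show "\<exists>no. \<forall>n\<ge>no. norm (Tl (vs n) - g) < r"
    proof (intro exI allI impI)
      fix n assume "no \<le> n"
      hence "1 / (real n + 1) \<le> inverse (real (Suc no))" by (simp add: inverse_eq_divide frac_le)
      thus "norm (Tl (vs n) - g) < r" using vs[of n] no by linarith
    qed
  qed
  from LIMSEQ_unique[OF l1 l2] show ?thesis by blast
qed

end


definition Wm :: "real \<Rightarrow> (int \<Rightarrow> 'a::real_normed_vector) \<Rightarrow> int \<Rightarrow> 'a" where
  "Wm r u = (\<lambda>k. r powr (- real_of_int k) *\<^sub>R u k)"

definition Wp :: "real \<Rightarrow> (int \<Rightarrow> 'a::real_normed_vector) \<Rightarrow> int \<Rightarrow> 'a" where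
  "Wp r u = (\<lambda>k. r powr (real_of_int k) *\<^sub>R u k)"

lemma Wm_Wp: "r > 0 \<Longrightarrow> Wm r (Wp r f) = f"
  by (simp add: Wm_def Wp_def fun_eq_iff powr_add[symmetric])

lemma Wp_Wm: "r > 0 \<Longrightarrow> Wp r (Wm r f) = f"
  by (simp add: Wm_def Wp_def fun_eq_iff powr_add[symmetric])

lemma Wm_normsq:
  assumes "r > 0"
  shows "(norm (Wm r u k))\<^sup>2 = (norm (u k))\<^sup>2 * r powr (- 2 * real_of_int k)"
proof -
  have "(norm (Wm r u k))\<^sup>2 = (r powr (- real_of_int k))\<^sup>2 * (norm (u k))\<^sup>2"
    using assms by (simp add: Wm_def power_mult_distrib)
  also have "(r powr (- real_of_int k))\<^sup>2 = r powr (- 2 * real_of_int k)"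
    by (simp add: power2_eq_square powr_add[symmetric])
  finally show ?thesis by simp
qed

lemma l2rho_iff: "r > 0 \<Longrightarrow> u \<in> l2rho r \<longleftrightarrow> Wm r u \<in> l2set"
  by (simp add: l2rho_def l2set_def Wm_normsq)

lemma norm_l2rho_eq: "r > 0 \<Longrightarrow> u \<in> l2rho r \<Longrightarrow> norm_l2rho r u = norm (Abs_l2 (Wm r u))"
  by (simp add: norm_l2rho_def norm_l2_def vec_Abs l2rho_iff Wm_normsq)

lemma Wm_diff: "Wm r (u - v) = (\<lambda>k. Wm r u k - Wm r v k)"
  by (simp add: Wm_def fun_eq_iff scaleR_diff_right)

lemma norm_l2rho_nonneg: "0 \<le> norm_l2rho r u"
  by (simp add: norm_l2rho_def infsum_nonneg)

lemma lip_facts: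
  fixes F :: "(int \<Rightarrow> 'a::real_normed_vector) \<Rightarrow> int \<Rightarrow> 'a"
  assumes "lipschitz_l2rho r F"
  shows "0 \<le> lip_l2rho r F"
    and "\<forall>u::int\<Rightarrow>'a\<in>l2rho r. \<forall>v\<in>l2rho r. norm_l2rho r (F u - F v) \<le> lip_l2rho r F * norm_l2rho r (u - v)"
proof -
  define S where "S = {L. 0 \<le> L \<and> (\<forall>u\<in>l2rho r. \<forall>v\<in>l2rho r.
        norm_l2rho r (F u - F v) \<le> L * norm_l2rho r (u - v))}"
  have lipS: "lip_l2rho r F = Inf S" by (simp add: lip_l2rho_def S_def)
  obtain L0 where L0: "\<forall>u\<in>l2rho r. \<forall>v\<in>l2rho r. norm_l2rho r (F u - F v) \<le> L0 * norm_l2rho r (u - v)"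
    using assms by (auto simp: lipschitz_l2rho_def)
  have "max L0 0 \<in> S"
    unfolding S_def
  proof (safe)
    fix u v :: "int \<Rightarrow> 'a" assume "u \<in> l2rho r" "v \<in> l2rho r"
    hence "norm_l2rho r (F u - F v) \<le> L0 * norm_l2rho r (u - v)" using L0 by blast
    also have "\<dots> \<le> max L0 0 * norm_l2rho r (u - v)"
      by (rule mult_right_mono) (simp_all add: norm_l2rho_nonneg)
    finally show "norm_l2rho r (F u - F v) \<le> max L0 0 * norm_l2rho r (u - v)" .
  qed simp
  hence Sne: "S \<noteq> {}" by blast
  show "0 \<le> lip_l2rho r F" unfolding lipS by (rule cInf_greatest[OF Sne]) (simp add: S_def)
  show "\<forall>u\<in>l2rho r. \<forall>v\<in>l2rho r. norm_l2rho r (F u - F v) \<le> lip_l2rho r F * norm_l2rho r (u - v)"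
  proof (intro ballI)
    fix u v :: "int \<Rightarrow> 'a" assume uv: "u \<in> l2rho r" "v \<in> l2rho r"
    let ?a = "norm_l2rho r (F u - F v)" and ?b = "norm_l2rho r (u - v)"
    have adm: "?a \<le> L * ?b" if "L \<in> S" for L using that uv by (auto simp: S_def)
    show "?a \<le> lip_l2rho r F * ?b"
    proof (cases "?b = 0")
      case True
      then show ?thesis using adm[of "max L0 0"] \<open>max L0 0 \<in> S\<close> by simp
    next
      case False
      hence b: "?b > 0" using norm_l2rho_nonneg[of r "u - v"] by linarith
      have "?a / ?b \<le> Inf S"
        by (rule cInf_greatest[OF Sne]) (use adm b in \<open>simp add: pos_divide_le_eq\<close>)
      thus ?thesis unfolding lipS using b by (simp add: pos_divide_le_eq)
    qed
  qed
qed


lemma Wm_apply: "Wm r u k = r powr (- real_of_int k) *\<^sub>R u k" by (simp add: Wm_def)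

theorem theorem4p1:
  fixes A :: "'h::complex_hilbert \<Rightarrow> 'h" and \<rho> :: real
    and F :: "(int \<Rightarrow> 'h) \<Rightarrow> (int \<Rightarrow> 'h)"
  assumes "separable_space TYPE('h)"
    and "bounded_clinear A"
    and "\<rho> > 0"
    and "spectrum A \<inter> sphere 0 \<rho> = {}"
    and "\<forall>u\<in>l2rho \<rho>. F u \<in> l2rho \<rho>"
    and "lipschitz_l2rho \<rho> F"
    and "lip_l2rho \<rho> F * M_rho A \<rho> < 1"
  shows "\<forall>x::'h. \<exists>!u. u \<in> l2rho \<rho> \<and> shift u = (\<lambda>n. A (u n) + F u n + delta_m1 x n)"
proof
  fix x :: 'h
  interpret O: opset A \<rho> using assms(2,3,4) by unfold_locales
  have rpos: "\<rho> > 0" by (rule assms(3))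
  have Fl: "\<And>u. u \<in> l2rho \<rho> \<Longrightarrow> F u \<in> l2rho \<rho>" using assms(5) by blast
  define L where "L = lip_l2rho \<rho> F"
  have L0: "0 \<le> L" unfolding L_def by (rule lip_facts(1)[OF assms(6)])
  have Lip: "\<And>u v. u \<in> l2rho \<rho> \<Longrightarrow> v \<in> l2rho \<rho> \<Longrightarrow> norm_l2rho \<rho> (F u - F v) \<le> L * norm_l2rho \<rho> (u - v)"
    unfolding L_def using lip_facts(2)[OF assms(6)] by blast
  define E :: "(int \<Rightarrow> 'h) \<Rightarrow> 'h l2" where "E u = Abs_l2 (Wm \<rho> u)" for u
  define D :: "'h l2 \<Rightarrow> int \<Rightarrow> 'h" where "D v = Wp \<rho> (vec v)" for v
  have WmD: "Wm \<rho> (D v) = vec v" for v by (simp add: D_def Wm_Wp rpos)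
  have Dl: "D v \<in> l2rho \<rho>" for v using rpos by (simp add: l2rho_iff WmD vec_l2set)
  have ED: "E (D v) = v" for v by (simp add: E_def WmD vec_inverse)
  have DE: "u \<in> l2rho \<rho> \<Longrightarrow> D (E u) = u" for u
    using rpos by (simp add: D_def E_def vec_Abs l2rho_iff Wp_Wm)
  have vecE: "u \<in> l2rho \<rho> \<Longrightarrow> vec (E u) = Wm \<rho> u" for u
    using rpos by (simp add: E_def vec_Abs l2rho_iff)
  have diffl: "u \<in> l2rho \<rho> \<Longrightarrow> v \<in> l2rho \<rho> \<Longrightarrow> u - v \<in> l2rho \<rho>" for u v :: "int \<Rightarrow> 'h"
    using rpos by (simp add: l2rho_iff Wm_diff l2set_diff)
  have Ediff: "u \<in> l2rho \<rho> \<Longrightarrow> v \<in> l2rho \<rho> \<Longrightarrow> E (u - v) = E u - E v" for u v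
    by (rule l2_eqI) (simp add: vecE diffl vec_minus Wm_diff)
  have normE: "u \<in> l2rho \<rho> \<Longrightarrow> norm (E u) = norm_l2rho \<rho> u" for u
    using rpos by (simp add: E_def norm_l2rho_eq)
  have dl: "delta_m1 x \<in> l2rho \<rho>"
  proof -
    have "Wm \<rho> (delta_m1 x) \<in> l2set"
      by (rule l2set_finsupp(1)[of "{-1}"]) (auto simp: Wm_def delta_m1_def)
    thus ?thesis using rpos by (simp add: l2rho_iff)
  qed
  define G where "G v = E (F (D v))" for v
  define d where "d = E (delta_m1 x)"
  \<comment> \<open>the equation in the unweighted space\<close>
  have equiv: "shift u = (\<lambda>n. A (u n) + F u n + delta_m1 x n) \<longleftrightarrow> O.Tl (E u) = G (E u) + d"
    if ul: "u \<in> l2rho \<rho>" for u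
  proof -
    have "O.Tl (E u) = G (E u) + d \<longleftrightarrow> vec (O.Tl (E u)) = vec (G (E u) + d)"
      using vec_inject by metis
    also have "\<dots> \<longleftrightarrow> (\<forall>n. O.Tf (Wm \<rho> u) n = Wm \<rho> (F u) n + Wm \<rho> (delta_m1 x) n)"
      by (simp add: O.vec_Tl vecE ul G_def d_def DE Fl dl vec_plus fun_eq_iff)
    also have "\<dots> \<longleftrightarrow> (\<forall>n. u (n+1) = A (u n) + F u n + delta_m1 x n)"
    proof -
      have "O.Tf (Wm \<rho> u) n = Wm \<rho> (F u) n + Wm \<rho> (delta_m1 x) n \<longleftrightarrow> u (n+1) = A (u n) + F u n + delta_m1 x n" for n
      proof -
        have c: "\<rho> * \<rho> powr (- real_of_int (n+1)) = \<rho> powr (- real_of_int n)"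
        proof -
          have "\<rho> * \<rho> powr (- real_of_int (n+1)) = \<rho> powr 1 * \<rho> powr (- real_of_int (n+1))" using rpos by simp
          also have "\<dots> = \<rho> powr (1 + - real_of_int (n+1))" by (rule powr_add[symmetric])
          also have "\<dots> = \<rho> powr (- real_of_int n)" by simp
          finally show ?thesis .
        qed
        have c': "\<rho> * \<rho> powr (- real_of_int n - 1) = \<rho> powr (- real_of_int n)"
          using c by simp
        have e1: "O.Tf (Wm \<rho> u) n = \<rho> powr (- real_of_int n) *\<^sub>R (u (n+1) - A (u n))"
          by (simp add: O.Tf_def Wm_def bcl_scaleR[OF assms(2)] c' scaleR_diff_right)
        have e2: "Wm \<rho> (F u) n + Wm \<rho> (delta_m1 x) n = \<rho> powr (- real_of_int n) *\<^sub>R (F u n + delta_m1 x n)"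
          by (simp add: Wm_def scaleR_add_right)
        have nz: "\<rho> powr (- real_of_int n) \<noteq> 0" using rpos by simp
        have "O.Tf (Wm \<rho> u) n = Wm \<rho> (F u) n + Wm \<rho> (delta_m1 x) n \<longleftrightarrow>
              \<rho> powr (- real_of_int n) *\<^sub>R (u (n+1) - A (u n)) = \<rho> powr (- real_of_int n) *\<^sub>R (F u n + delta_m1 x n)"
          unfolding e1 e2 ..
        also have "\<dots> \<longleftrightarrow> u (n+1) - A (u n) = F u n + delta_m1 x n" using nz by simp
        also have "\<dots> \<longleftrightarrow> u (n+1) = A (u n) + F u n + delta_m1 x n" by (auto simp: algebra_simps)
        finally show ?thesis .
      qed
      thus ?thesis by simp
    qed
    also have "\<dots> \<longleftrightarrow> shift u = (\<lambda>n. A (u n) + F u n + delta_m1 x n)"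
      by (simp add: shift_def fun_eq_iff)
    finally show ?thesis by simp
  qed
  define \<Phi> where "\<Phi> v = (SOME w. O.Tl w = G v + d)" for v
  have TPhi: "O.Tl (\<Phi> v) = G v + d" for v
    unfolding \<Phi>_def by (rule someI_ex[OF O.Tl_surj])
  have inj: "O.Tl a = O.Tl b \<Longrightarrow> a = b" for a b
  proof -
    assume "O.Tl a = O.Tl b"
    hence "norm (a - b) \<le> 0" using O.LB[of "a - b"] by (simp add: O.Tl_diff)
    thus "a = b" by simp
  qed
  have contr: "dist (\<Phi> v) (\<Phi> v') \<le> (M_rho A \<rho> * L) * dist v v'" for v v'
  proof -
    have "norm (G v - G v') = norm (E (F (D v) - F (D v')))"
      by (simp add: G_def Ediff Fl Dl)
    also have "\<dots> = norm_l2rho \<rho> (F (D v) - F (D v'))" by (rule normE[OF diffl[OF Fl[OF Dl] Fl[OF Dl]]])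
    also have "\<dots> \<le> L * norm_l2rho \<rho> (D v - D v')" by (rule Lip[OF Dl Dl])
    also have "norm_l2rho \<rho> (D v - D v') = norm (v - v')"
      using normE[OF diffl[OF Dl Dl], of v v'] by (simp add: Ediff Dl ED)
    finally have gv: "norm (G v - G v') \<le> L * norm (v - v')" .
    have "dist (\<Phi> v) (\<Phi> v') \<le> M_rho A \<rho> * norm (O.Tl (\<Phi> v - \<Phi> v'))"
      using O.LB[of "\<Phi> v - \<Phi> v'"] by (simp add: dist_norm)
    also have "O.Tl (\<Phi> v - \<Phi> v') = G v - G v'" by (simp add: O.Tl_diff TPhi)
    also have "M_rho A \<rho> * norm (G v - G v') \<le> M_rho A \<rho> * (L * norm (v - v'))"
      by (rule mult_left_mono[OF gv O.M_nonneg])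
    finally show ?thesis by (simp add: dist_norm mult.assoc)
  qed
  have c0: "0 \<le> M_rho A \<rho> * L" using O.M_nonneg L0 by simp
  have c1: "M_rho A \<rho> * L < 1" using assms(7) by (simp add: L_def mult.commute)
  obtain vs where vs: "\<Phi> vs = vs"
    using banach_fix_type[OF c0 c1, of \<Phi>] contr by blast
  show "\<exists>!u. u \<in> l2rho \<rho> \<and> shift u = (\<lambda>n. A (u n) + F u n + delta_m1 x n)"
  proof (rule ex1I[of _ "D vs"])
    have "O.Tl (E (D vs)) = G (E (D vs)) + d" using TPhi[of vs] by (simp add: ED vs)
    thus "D vs \<in> l2rho \<rho> \<and> shift (D vs) = (\<lambda>n. A (D vs n) + F (D vs) n + delta_m1 x n)"
      using equiv[OF Dl] Dl by simp
  next
    fix u assume u: "u \<in> l2rho \<rho> \<and> shift u = (\<lambda>n. A (u n) + F u n + delta_m1 x n)"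
    hence eq: "O.Tl (E u) = G (E u) + d" using equiv by blast
    have "\<Phi> (E u) = E u" by (rule inj) (simp add: TPhi eq)
    hence "E u = vs" using banach_fix_type[OF c0 c1, of \<Phi>] contr vs by blast
    thus "u = D vs" using DE u by force
  qed
qed


end
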